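(* Let $\mathsf V$ be a pseudovariety of semigroups. Then $\mathsf V$ is concatenation-closed if and only if the pseudovariety of semigroupoids $g\mathsf V$ is concatenation-closed.
   Context: A pseudovariety of semigroups is a class of finite semigroups closed under subsemigroups, homomorphic images and finite direct products; a pseudovariety of semigroupoids is a class of finite semigroupoids closed under divisors, finite direct products and finite coproducts (semigroups being one-vertex semigroupoids; composition of edges $s,t$ is defined when the source of $s$ equals the range of $t$). $g\mathsf V$ is the smallest pseudovariety of semigroupoids containing $\mathsf V$. For a graph $A$ with free semigroupoid of paths $A^+$, a language $L\subseteq E(A^+)$ is $\mathsf W$-recognizable if $L=\varphi^{-1}\varphi(L)$ for a homomorphism $\varphi\colon A^+\to F$ with $F\in\mathsf W$; concatenation $LK$ consists of the composable products $uv$, $u\in L$, $v\in K$. A pseudovariety of semigroups (resp. semigroupoids) is concatenation-closed if for every finite alphabet (resp. finite graph) $A$ the recognizable languages over $A$ are closed under concatenation. *)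

theory Defs
  imports Main "HOL-Library.Nat_Bijection"
begin

text \<open>Members of a
pseudovariety are encoded with carrier a finite subset of nat (every finite
semigroup has an isomorphic copy of this form; all closure conditions below
yield isomorphism-closed classes).\<close>

record 'a sgrp =
  sg_carrier :: "'a set"
  sg_mult :: "'a \<Rightarrow> 'a \<Rightarrow> 'a"

definition fin_sg :: "'a sgrp \<Rightarrow> bool" where
  "fin_sg S \<longleftrightarrow> finite (sg_carrier S) \<and> sg_carrier S \<noteq> {} \<and>
     (\<forall>x\<in>sg_carrier S. \<forall>y\<in>sg_carrier S. sg_mult S x y \<in> sg_carrier S) \<and>
     (\<forall>x\<in>sg_carrier S. \<forall>y\<in>sg_carrier S. \<forall>z\<in>sg_carrier S.
        sg_mult S (sg_mult S x y) z = sg_mult S x (sg_mult S y z))"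

definition sg_hom :: "'a sgrp \<Rightarrow> 'b sgrp \<Rightarrow> ('a \<Rightarrow> 'b) \<Rightarrow> bool" where
  "sg_hom S T h \<longleftrightarrow> (\<forall>x\<in>sg_carrier S. h x \<in> sg_carrier T) \<and>
     (\<forall>x\<in>sg_carrier S. \<forall>y\<in>sg_carrier S. h (sg_mult S x y) = sg_mult T (h x) (h y))"

definition sg_trivial :: "nat sgrp" where
  "sg_trivial = \<lparr>sg_carrier = {0}, sg_mult = (\<lambda>_ _. 0)\<rparr>"

definition sg_prod :: "nat sgrp \<Rightarrow> nat sgrp \<Rightarrow> nat sgrp" where
  "sg_prod S T = \<lparr>sg_carrier = prod_encode ` (sg_carrier S \<times> sg_carrier T),
     sg_mult = (\<lambda>x y. case (prod_decode x, prod_decode y) of ((a, b), (c, d)) \<Rightarrow>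
                    prod_encode (sg_mult S a c, sg_mult T b d))\<rparr>"

text \<open>Pseudovariety: closed under subsemigroups, homomorphic images and finite direct
products (the empty product being the trivial semigroup).\<close>

definition sg_pseudovariety :: "nat sgrp set \<Rightarrow> bool" where
  "sg_pseudovariety V \<longleftrightarrow>
     (\<forall>S\<in>V. fin_sg S) \<and>
     (\<forall>S T. T \<in> V \<longrightarrow> fin_sg S \<longrightarrow> sg_carrier S \<subseteq> sg_carrier T \<longrightarrow>
        (\<forall>x\<in>sg_carrier S. \<forall>y\<in>sg_carrier S. sg_mult S x y = sg_mult T x y) \<longrightarrow> S \<in> V) \<and>
     (\<forall>S T h. T \<in> V \<longrightarrow> fin_sg S \<longrightarrow> sg_hom T S h \<longrightarrow> h ` sg_carrier T = sg_carrier S \<longrightarrow> S \<in> V) \<and>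
     sg_trivial \<in> V \<and>
     (\<forall>S\<in>V. \<forall>T\<in>V. sg_prod S T \<in> V)"

definition words_plus :: "'a set \<Rightarrow> 'a list set" where
  "words_plus A = {w. w \<noteq> [] \<and> set w \<subseteq> A}"

definition sg_recognizable :: "nat sgrp set \<Rightarrow> 'a set \<Rightarrow> 'a list set \<Rightarrow> bool" where
  "sg_recognizable V A L \<longleftrightarrow> L \<subseteq> words_plus A \<and>
     (\<exists>S\<in>V. \<exists>\<phi>. (\<forall>w\<in>words_plus A. \<phi> w \<in> sg_carrier S) \<and>
        (\<forall>u\<in>words_plus A. \<forall>v\<in>words_plus A. \<phi> (u @ v) = sg_mult S (\<phi> u) (\<phi> v)) \<and>
        L = {w \<in> words_plus A. \<phi> w \<in> \<phi> ` L})"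

definition word_concat :: "'a list set \<Rightarrow> 'a list set \<Rightarrow> 'a list set" where
  "word_concat L K = {u @ v | u v. u \<in> L \<and> v \<in> K}"

definition sg_concat_closed :: "nat sgrp set \<Rightarrow> bool" where
  "sg_concat_closed V \<longleftrightarrow>
     (\<forall>A :: nat set. finite A \<longrightarrow> (\<forall>L K. sg_recognizable V A L \<longrightarrow> sg_recognizable V A K \<longrightarrow>
        sg_recognizable V A (word_concat L K)))"

text \<open>Convention: the composite cmp s t (written st) is defined when the source of s
equals the range (target) of t; it then has source src t and range tgt s.\<close>

record ('v, 'e) sgd =
  sgd_verts :: "'v set"
  sgd_edges :: "'e set"
  sgd_src :: "'e \<Rightarrow> 'v"
  sgd_tgt :: "'e \<Rightarrow> 'v"
  sgd_cmp :: "'e \<Rightarrow> 'e \<Rightarrow> 'e"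

definition semigroupoid :: "('v, 'e) sgd \<Rightarrow> bool" where
  "semigroupoid S \<longleftrightarrow>
     (\<forall>e\<in>sgd_edges S. sgd_src S e \<in> sgd_verts S \<and> sgd_tgt S e \<in> sgd_verts S) \<and>
     (\<forall>s\<in>sgd_edges S. \<forall>t\<in>sgd_edges S. sgd_src S s = sgd_tgt S t \<longrightarrow>
        sgd_cmp S s t \<in> sgd_edges S \<and> sgd_src S (sgd_cmp S s t) = sgd_src S t \<and>
        sgd_tgt S (sgd_cmp S s t) = sgd_tgt S s) \<and>
     (\<forall>s\<in>sgd_edges S. \<forall>t\<in>sgd_edges S. \<forall>u\<in>sgd_edges S.
        sgd_src S s = sgd_tgt S t \<longrightarrow> sgd_src S t = sgd_tgt S u \<longrightarrow>
        sgd_cmp S (sgd_cmp S s t) u = sgd_cmp S s (sgd_cmp S t u))"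

definition fin_sgd :: "('v, 'e) sgd \<Rightarrow> bool" where
  "fin_sgd S \<longleftrightarrow> semigroupoid S \<and> finite (sgd_verts S) \<and> finite (sgd_edges S)"

definition sgd_hom :: "('v, 'e) sgd \<Rightarrow> ('w, 'f) sgd \<Rightarrow> ('v \<Rightarrow> 'w) \<Rightarrow> ('e \<Rightarrow> 'f) \<Rightarrow> bool" where
  "sgd_hom S T hv he \<longleftrightarrow>
     (\<forall>x\<in>sgd_verts S. hv x \<in> sgd_verts T) \<and>
     (\<forall>e\<in>sgd_edges S. he e \<in> sgd_edges T \<and> sgd_src T (he e) = hv (sgd_src S e) \<and>
        sgd_tgt T (he e) = hv (sgd_tgt S e)) \<and>
     (\<forall>s\<in>sgd_edges S. \<forall>t\<in>sgd_edges S. sgd_src S s = sgd_tgt S t \<longrightarrow>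
        he (sgd_cmp S s t) = sgd_cmp T (he s) (he t))"

text \<open>Division in the sense of Tilson: a vertex map together with an edge relation
sending each edge to a nonempty set of edges between the image vertices, which is
a relational morphism and is injective on coterminal edges.\<close>

definition sgd_divides :: "('v, 'e) sgd \<Rightarrow> ('w, 'f) sgd \<Rightarrow> bool" where
  "sgd_divides S T \<longleftrightarrow> (\<exists>(hv :: 'v \<Rightarrow> 'w) (R :: 'e \<Rightarrow> 'f set).
     (\<forall>x\<in>sgd_verts S. hv x \<in> sgd_verts T) \<and>
     (\<forall>e\<in>sgd_edges S. R e \<noteq> {} \<and>
        R e \<subseteq> {f \<in> sgd_edges T. sgd_src T f = hv (sgd_src S e) \<and> sgd_tgt T f = hv (sgd_tgt S e)}) \<and>
     (\<forall>s\<in>sgd_edges S. \<forall>t\<in>sgd_edges S. sgd_src S s = sgd_tgt S t \<longrightarrow>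
        (\<forall>f\<in>R s. \<forall>g\<in>R t. sgd_cmp T f g \<in> R (sgd_cmp S s t))) \<and>
     (\<forall>s\<in>sgd_edges S. \<forall>t\<in>sgd_edges S. sgd_src S s = sgd_src S t \<longrightarrow> sgd_tgt S s = sgd_tgt S t \<longrightarrow>
        R s \<inter> R t \<noteq> {} \<longrightarrow> s = t))"

definition sgd_trivial :: "(nat, nat) sgd" where
  "sgd_trivial = \<lparr>sgd_verts = {0}, sgd_edges = {0}, sgd_src = (\<lambda>_. 0), sgd_tgt = (\<lambda>_. 0),
     sgd_cmp = (\<lambda>_ _. 0)\<rparr>"

definition sgd_empty :: "(nat, nat) sgd" where
  "sgd_empty = \<lparr>sgd_verts = {}, sgd_edges = {}, sgd_src = (\<lambda>_. 0), sgd_tgt = (\<lambda>_. 0),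
     sgd_cmp = (\<lambda>_ _. 0)\<rparr>"

definition sgd_prod :: "(nat, nat) sgd \<Rightarrow> (nat, nat) sgd \<Rightarrow> (nat, nat) sgd" where
  "sgd_prod S T = \<lparr>sgd_verts = prod_encode ` (sgd_verts S \<times> sgd_verts T),
     sgd_edges = prod_encode ` (sgd_edges S \<times> sgd_edges T),
     sgd_src = (\<lambda>e. case prod_decode e of (a, b) \<Rightarrow> prod_encode (sgd_src S a, sgd_src T b)),
     sgd_tgt = (\<lambda>e. case prod_decode e of (a, b) \<Rightarrow> prod_encode (sgd_tgt S a, sgd_tgt T b)),
     sgd_cmp = (\<lambda>x y. case (prod_decode x, prod_decode y) of ((a, b), (c, d)) \<Rightarrow>
                    prod_encode (sgd_cmp S a c, sgd_cmp T b d))\<rparr>"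

definition sgd_coprod :: "(nat, nat) sgd \<Rightarrow> (nat, nat) sgd \<Rightarrow> (nat, nat) sgd" where
  "sgd_coprod S T = \<lparr>sgd_verts = sum_encode ` (Inl ` sgd_verts S \<union> Inr ` sgd_verts T),
     sgd_edges = sum_encode ` (Inl ` sgd_edges S \<union> Inr ` sgd_edges T),
     sgd_src = (\<lambda>e. case sum_decode e of Inl a \<Rightarrow> sum_encode (Inl (sgd_src S a))
                                      | Inr b \<Rightarrow> sum_encode (Inr (sgd_src T b))),
     sgd_tgt = (\<lambda>e. case sum_decode e of Inl a \<Rightarrow> sum_encode (Inl (sgd_tgt S a))
                                      | Inr b \<Rightarrow> sum_encode (Inr (sgd_tgt T b))),
     sgd_cmp = (\<lambda>x y. case (sum_decode x, sum_decode y) of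
                    (Inl a, Inl c) \<Rightarrow> sum_encode (Inl (sgd_cmp S a c))
                  | (Inr b, Inr d) \<Rightarrow> sum_encode (Inr (sgd_cmp T b d))
                  | _ \<Rightarrow> 0)\<rparr>"

text \<open>Pseudovariety of semigroupoids: closed under divisors, finite direct products
(empty product = trivial semigroupoid) and finite coproducts (empty coproduct =
empty semigroupoid).\<close>

definition sgd_pseudovariety :: "(nat, nat) sgd set \<Rightarrow> bool" where
  "sgd_pseudovariety W \<longleftrightarrow>
     (\<forall>S\<in>W. fin_sgd S) \<and>
     (\<forall>S T. T \<in> W \<longrightarrow> fin_sgd S \<longrightarrow> sgd_divides S T \<longrightarrow> S \<in> W) \<and>
     sgd_trivial \<in> W \<and>
     (\<forall>S\<in>W. \<forall>T\<in>W. sgd_prod S T \<in> W) \<and>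
     sgd_empty \<in> W \<and>
     (\<forall>S\<in>W. \<forall>T\<in>W. sgd_coprod S T \<in> W)"

definition sg_as_sgd :: "nat sgrp \<Rightarrow> (nat, nat) sgd" where
  "sg_as_sgd S = \<lparr>sgd_verts = {0}, sgd_edges = sg_carrier S, sgd_src = (\<lambda>_. 0),
     sgd_tgt = (\<lambda>_. 0), sgd_cmp = sg_mult S\<rparr>"

definition global_pv :: "nat sgrp set \<Rightarrow> (nat, nat) sgd set" where
  "global_pv V = \<Inter> {W. sgd_pseudovariety W \<and> sg_as_sgd ` V \<subseteq> W}"

record ('v, 'e) graph =
  gr_verts :: "'v set"
  gr_edges :: "'e set"
  gr_src :: "'e \<Rightarrow> 'v"
  gr_tgt :: "'e \<Rightarrow> 'v"

definition finite_graph :: "('v, 'e) graph \<Rightarrow> bool" where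
  "finite_graph A \<longleftrightarrow> finite (gr_verts A) \<and> finite (gr_edges A) \<and>
     (\<forall>e\<in>gr_edges A. gr_src A e \<in> gr_verts A \<and> gr_tgt A e \<in> gr_verts A)"

definition is_path :: "('v, 'e) graph \<Rightarrow> 'e list \<Rightarrow> bool" where
  "is_path A w \<longleftrightarrow> w \<noteq> [] \<and> set w \<subseteq> gr_edges A \<and>
     (\<forall>i. Suc i < length w \<longrightarrow> gr_src A (w ! i) = gr_tgt A (w ! Suc i))"

definition free_sgd :: "('v, 'e) graph \<Rightarrow> ('v, 'e list) sgd" where
  "free_sgd A = \<lparr>sgd_verts = gr_verts A, sgd_edges = {w. is_path A w},
     sgd_src = (\<lambda>w. gr_src A (last w)), sgd_tgt = (\<lambda>w. gr_tgt A (hd w)),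
     sgd_cmp = (@)\<rparr>"

definition sgd_recognizable :: "(nat, nat) sgd set \<Rightarrow> ('v, 'e) graph \<Rightarrow> 'e list set \<Rightarrow> bool" where
  "sgd_recognizable W A L \<longleftrightarrow> L \<subseteq> sgd_edges (free_sgd A) \<and>
     (\<exists>F\<in>W. \<exists>hv he. sgd_hom (free_sgd A) F hv he \<and>
        L = {w \<in> sgd_edges (free_sgd A). he w \<in> he ` L})"

definition path_concat :: "('v, 'e) graph \<Rightarrow> 'e list set \<Rightarrow> 'e list set \<Rightarrow> 'e list set" where
  "path_concat A L K = {u @ v | u v. u \<in> L \<and> v \<in> K \<and>
      sgd_src (free_sgd A) u = sgd_tgt (free_sgd A) v}"

definition sgd_concat_closed :: "(nat, nat) sgd set \<Rightarrow> bool" where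
  "sgd_concat_closed W \<longleftrightarrow>
     (\<forall>A :: (nat, nat) graph. finite_graph A \<longrightarrow> (\<forall>L K. sgd_recognizable W A L \<longrightarrow>
        sgd_recognizable W A K \<longrightarrow> sgd_recognizable W A (path_concat A L K)))"

end

theory Submission
  imports Defs
begin


lemma fin_sgd_as: "fin_sg S \<Longrightarrow> fin_sgd (sg_as_sgd S)"
  unfolding fin_sg_def fin_sgd_def semigroupoid_def sg_as_sgd_def by auto

lemma div_refl_as: "sgd_divides (sg_as_sgd S) (sg_as_sgd S)"
  unfolding sgd_divides_def sg_as_sgd_def
  by (rule exI[of _ "\<lambda>x. x"], rule exI[of _ "\<lambda>e. {e}"]) auto

lemma div_trans:
  assumes "sgd_divides S T" "sgd_divides T U"
  shows "sgd_divides S U"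
proof -
  from assms(1) obtain hv R where h1: "\<forall>x\<in>sgd_verts S. hv x \<in> sgd_verts T"
    and r1: "\<forall>e\<in>sgd_edges S. R e \<noteq> {} \<and>
        R e \<subseteq> {f \<in> sgd_edges T. sgd_src T f = hv (sgd_src S e) \<and> sgd_tgt T f = hv (sgd_tgt S e)}"
    and c1: "\<forall>s\<in>sgd_edges S. \<forall>t\<in>sgd_edges S. sgd_src S s = sgd_tgt S t \<longrightarrow>
        (\<forall>f\<in>R s. \<forall>g\<in>R t. sgd_cmp T f g \<in> R (sgd_cmp S s t))"
    and i1: "\<forall>s\<in>sgd_edges S. \<forall>t\<in>sgd_edges S. sgd_src S s = sgd_src S t \<longrightarrow> sgd_tgt S s = sgd_tgt S t \<longrightarrow>
        R s \<inter> R t \<noteq> {} \<longrightarrow> s = t"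
    unfolding sgd_divides_def by blast
  from assms(2) obtain hv2 R2 where h2: "\<forall>x\<in>sgd_verts T. hv2 x \<in> sgd_verts U"
    and r2: "\<forall>e\<in>sgd_edges T. R2 e \<noteq> {} \<and>
        R2 e \<subseteq> {f \<in> sgd_edges U. sgd_src U f = hv2 (sgd_src T e) \<and> sgd_tgt U f = hv2 (sgd_tgt T e)}"
    and c2: "\<forall>s\<in>sgd_edges T. \<forall>t\<in>sgd_edges T. sgd_src T s = sgd_tgt T t \<longrightarrow>
        (\<forall>f\<in>R2 s. \<forall>g\<in>R2 t. sgd_cmp U f g \<in> R2 (sgd_cmp T s t))"
    and i2: "\<forall>s\<in>sgd_edges T. \<forall>t\<in>sgd_edges T. sgd_src T s = sgd_src T t \<longrightarrow> sgd_tgt T s = sgd_tgt T t \<longrightarrow>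
        R2 s \<inter> R2 t \<noteq> {} \<longrightarrow> s = t"
    unfolding sgd_divides_def by blast
  show ?thesis unfolding sgd_divides_def
  proof (intro exI[of _ "hv2 \<circ> hv"] exI[of _ "\<lambda>e. \<Union>f\<in>R e. R2 f"] conjI ballI impI)
    show "x \<in> sgd_verts S \<Longrightarrow> (hv2 \<circ> hv) x \<in> sgd_verts U" for x using h1 h2 by auto
  next
    fix e assume e: "e \<in> sgd_edges S"
    then obtain f where "f \<in> R e" using r1 by blast
    then have "f \<in> sgd_edges T" using r1 e by blast
    then show "(\<Union>f\<in>R e. R2 f) \<noteq> {}" using r2 \<open>f \<in> R e\<close> by blast
    show "(\<Union>f\<in>R e. R2 f) \<subseteq> {f \<in> sgd_edges U. sgd_src U f = (hv2 \<circ> hv) (sgd_src S e) \<and> sgd_tgt U f = (hv2 \<circ> hv) (sgd_tgt S e)}"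
    proof
      fix g assume "g \<in> (\<Union>f\<in>R e. R2 f)"
      then obtain f where f: "f \<in> R e" "g \<in> R2 f" by blast
      have "f \<in> sgd_edges T" "sgd_src T f = hv (sgd_src S e)" "sgd_tgt T f = hv (sgd_tgt S e)"
        using r1 e f by blast+
      then show "g \<in> {f \<in> sgd_edges U. sgd_src U f = (hv2 \<circ> hv) (sgd_src S e) \<and> sgd_tgt U f = (hv2 \<circ> hv) (sgd_tgt S e)}"
      proof -
        have "g \<in> sgd_edges U \<and> sgd_src U g = hv2 (sgd_src T f) \<and> sgd_tgt U g = hv2 (sgd_tgt T f)"
          using r2 f \<open>f \<in> sgd_edges T\<close> by blast
        then show ?thesis using \<open>sgd_src T f = _\<close> \<open>sgd_tgt T f = _\<close> by simp
      qed
    qed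
  next
    fix s t assume s: "s \<in> sgd_edges S" and t: "t \<in> sgd_edges S" and st: "sgd_src S s = sgd_tgt S t"
    fix g1 g2 assume "g1 \<in> (\<Union>f\<in>R s. R2 f)" "g2 \<in> (\<Union>f\<in>R t. R2 f)"
      then obtain f1 f2 where f: "f1 \<in> R s" "g1 \<in> R2 f1" "f2 \<in> R t" "g2 \<in> R2 f2" by blast
      have f1: "f1 \<in> sgd_edges T" "sgd_src T f1 = hv (sgd_src S s)" using r1 s f by blast+
      have f2: "f2 \<in> sgd_edges T" "sgd_tgt T f2 = hv (sgd_tgt S t)" using r1 t f by blast+
      have "sgd_cmp U g1 g2 \<in> R2 (sgd_cmp T f1 f2)" using c2 f1 f2 f st by auto
      moreover have "sgd_cmp T f1 f2 \<in> R (sgd_cmp S s t)" using c1 s t st f by blast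
      ultimately show "sgd_cmp U g1 g2 \<in> (\<Union>f\<in>R (sgd_cmp S s t). R2 f)" by blast
  next
    fix s t assume s: "s \<in> sgd_edges S" and t: "t \<in> sgd_edges S" and ss: "sgd_src S s = sgd_src S t"
      and tt: "sgd_tgt S s = sgd_tgt S t" and ne: "(\<Union>f\<in>R s. R2 f) \<inter> (\<Union>f\<in>R t. R2 f) \<noteq> {}"
    then obtain g f1 f2 where f: "f1 \<in> R s" "g \<in> R2 f1" "f2 \<in> R t" "g \<in> R2 f2" by blast
    have f1: "f1 \<in> sgd_edges T" "sgd_src T f1 = hv (sgd_src S s)" "sgd_tgt T f1 = hv (sgd_tgt S s)" using r1 s f by blast+
    have f2: "f2 \<in> sgd_edges T" "sgd_src T f2 = hv (sgd_src S t)" "sgd_tgt T f2 = hv (sgd_tgt S t)" using r1 t f by blast+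
    have "R2 f1 \<inter> R2 f2 \<noteq> {}" using f by blast
    then have "f1 = f2" using i2[rule_format, OF f1(1) f2(1)] f1 f2 ss tt by simp
    then have "R s \<inter> R t \<noteq> {}" using f by blast
    then show "s = t" using i1[rule_format, OF s t ss tt] by simp
  qed
qed

lemma fin_sgd_trivial: "fin_sgd sgd_trivial"
  unfolding fin_sgd_def semigroupoid_def sgd_trivial_def by auto

lemma fin_sg_trivial: "fin_sg sg_trivial"
  unfolding fin_sg_def sg_trivial_def by auto

lemma div_trivial: "sgd_divides sgd_trivial (sg_as_sgd sg_trivial)"
  unfolding sgd_divides_def sgd_trivial_def sg_as_sgd_def sg_trivial_def
  by (rule exI[of _ "\<lambda>x. x"], rule exI[of _ "\<lambda>e. {0}"]) auto

lemma fin_sgd_empty: "fin_sgd sgd_empty"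
  unfolding fin_sgd_def semigroupoid_def sgd_empty_def by auto

lemma div_empty: "sgd_divides sgd_empty T"
  unfolding sgd_divides_def sgd_empty_def by auto


lemma semigroupoid_prod: assumes "semigroupoid C1" "semigroupoid C2" shows "semigroupoid (sgd_prod C1 C2)"
proof -
  note a1 = assms(1)[unfolded semigroupoid_def] and a2 = assms(2)[unfolded semigroupoid_def]
  show ?thesis unfolding semigroupoid_def
  proof (intro conjI ballI impI)
    fix e assume "e \<in> sgd_edges (sgd_prod C1 C2)"
    then obtain a b where "e = prod_encode (a,b)" "a \<in> sgd_edges C1" "b \<in> sgd_edges C2" by (auto simp: sgd_prod_def)
    then show "sgd_src (sgd_prod C1 C2) e \<in> sgd_verts (sgd_prod C1 C2)" "sgd_tgt (sgd_prod C1 C2) e \<in> sgd_verts (sgd_prod C1 C2)"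
      using a1 a2 by (auto simp: sgd_prod_def)
  next
    fix s t assume "s \<in> sgd_edges (sgd_prod C1 C2)" "t \<in> sgd_edges (sgd_prod C1 C2)"
      and st: "sgd_src (sgd_prod C1 C2) s = sgd_tgt (sgd_prod C1 C2) t"
    then obtain a b c d where s: "s = prod_encode (a,b)" "a \<in> sgd_edges C1" "b \<in> sgd_edges C2"
      and t: "t = prod_encode (c,d)" "c \<in> sgd_edges C1" "d \<in> sgd_edges C2" by (auto simp: sgd_prod_def)
    from st s t have "sgd_src C1 a = sgd_tgt C1 c" "sgd_src C2 b = sgd_tgt C2 d" by (auto simp: sgd_prod_def)
    then show "sgd_cmp (sgd_prod C1 C2) s t \<in> sgd_edges (sgd_prod C1 C2)"
      "sgd_src (sgd_prod C1 C2) (sgd_cmp (sgd_prod C1 C2) s t) = sgd_src (sgd_prod C1 C2) t"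
      "sgd_tgt (sgd_prod C1 C2) (sgd_cmp (sgd_prod C1 C2) s t) = sgd_tgt (sgd_prod C1 C2) s"
      using a1 a2 s t by (auto simp: sgd_prod_def)
  next
    fix s t u assume "s \<in> sgd_edges (sgd_prod C1 C2)" "t \<in> sgd_edges (sgd_prod C1 C2)" "u \<in> sgd_edges (sgd_prod C1 C2)"
      and st: "sgd_src (sgd_prod C1 C2) s = sgd_tgt (sgd_prod C1 C2) t"
      and tu: "sgd_src (sgd_prod C1 C2) t = sgd_tgt (sgd_prod C1 C2) u"
    then obtain a b c d x y where s: "s = prod_encode (a,b)" "a \<in> sgd_edges C1" "b \<in> sgd_edges C2"
      and t: "t = prod_encode (c,d)" "c \<in> sgd_edges C1" "d \<in> sgd_edges C2"
      and u: "u = prod_encode (x,y)" "x \<in> sgd_edges C1" "y \<in> sgd_edges C2" by (auto simp: sgd_prod_def)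
    from st tu s t u have "sgd_src C1 a = sgd_tgt C1 c" "sgd_src C2 b = sgd_tgt C2 d"
       "sgd_src C1 c = sgd_tgt C1 x" "sgd_src C2 d = sgd_tgt C2 y" by (auto simp: sgd_prod_def)
    then show "sgd_cmp (sgd_prod C1 C2) (sgd_cmp (sgd_prod C1 C2) s t) u = sgd_cmp (sgd_prod C1 C2) s (sgd_cmp (sgd_prod C1 C2) t u)"
      using a1 a2 s t u by (auto simp: sgd_prod_def)
  qed
qed

lemma fin_sgd_prod: assumes "fin_sgd C1" "fin_sgd C2" shows "fin_sgd (sgd_prod C1 C2)"
  using assms semigroupoid_prod unfolding fin_sgd_def by (auto simp: sgd_prod_def)

lemma semigroupoid_coprod: assumes "semigroupoid C1" "semigroupoid C2" shows "semigroupoid (sgd_coprod C1 C2)"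
proof -
  note a1 = assms(1)[unfolded semigroupoid_def] and a2 = assms(2)[unfolded semigroupoid_def]
  have E: "e \<in> sgd_edges (sgd_coprod C1 C2) \<longleftrightarrow> (\<exists>a\<in>sgd_edges C1. e = sum_encode (Inl a)) \<or> (\<exists>b\<in>sgd_edges C2. e = sum_encode (Inr b))" for e
    by (auto simp: sgd_coprod_def)
  have src: "sgd_src (sgd_coprod C1 C2) (sum_encode (Inl a)) = sum_encode (Inl (sgd_src C1 a))"
     "sgd_src (sgd_coprod C1 C2) (sum_encode (Inr b)) = sum_encode (Inr (sgd_src C2 b))"
     "sgd_tgt (sgd_coprod C1 C2) (sum_encode (Inl a)) = sum_encode (Inl (sgd_tgt C1 a))"
     "sgd_tgt (sgd_coprod C1 C2) (sum_encode (Inr b)) = sum_encode (Inr (sgd_tgt C2 b))"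
     "sgd_cmp (sgd_coprod C1 C2) (sum_encode (Inl a)) (sum_encode (Inl c)) = sum_encode (Inl (sgd_cmp C1 a c))"
     "sgd_cmp (sgd_coprod C1 C2) (sum_encode (Inr b)) (sum_encode (Inr d)) = sum_encode (Inr (sgd_cmp C2 b d))"
     for a b c d by (simp_all add: sgd_coprod_def)
  have V: "sum_encode (Inl v) \<in> sgd_verts (sgd_coprod C1 C2) \<longleftrightarrow> v \<in> sgd_verts C1"
     "sum_encode (Inr w) \<in> sgd_verts (sgd_coprod C1 C2) \<longleftrightarrow> w \<in> sgd_verts C2" for v w
    by (auto simp: sgd_coprod_def sum_encode_eq)
  have E2: "sum_encode (Inl v) \<in> sgd_edges (sgd_coprod C1 C2) \<longleftrightarrow> v \<in> sgd_edges C1"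
     "sum_encode (Inr w) \<in> sgd_edges (sgd_coprod C1 C2) \<longleftrightarrow> w \<in> sgd_edges C2" for v w
    by (auto simp: sgd_coprod_def sum_encode_eq)
  show ?thesis unfolding semigroupoid_def
  proof (intro conjI ballI impI)
    fix e assume "e \<in> sgd_edges (sgd_coprod C1 C2)"
    then show "sgd_src (sgd_coprod C1 C2) e \<in> sgd_verts (sgd_coprod C1 C2)" "sgd_tgt (sgd_coprod C1 C2) e \<in> sgd_verts (sgd_coprod C1 C2)"
      unfolding E using a1 a2 src V by auto
  next
    fix s t assume "s \<in> sgd_edges (sgd_coprod C1 C2)" "t \<in> sgd_edges (sgd_coprod C1 C2)"
      and st: "sgd_src (sgd_coprod C1 C2) s = sgd_tgt (sgd_coprod C1 C2) t"
    then show "sgd_cmp (sgd_coprod C1 C2) s t \<in> sgd_edges (sgd_coprod C1 C2)"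
      "sgd_src (sgd_coprod C1 C2) (sgd_cmp (sgd_coprod C1 C2) s t) = sgd_src (sgd_coprod C1 C2) t"
      "sgd_tgt (sgd_coprod C1 C2) (sgd_cmp (sgd_coprod C1 C2) s t) = sgd_tgt (sgd_coprod C1 C2) s"
      unfolding E using a1 a2 by (auto simp: src E2 sum_encode_eq)
  next
    fix s t u assume "s \<in> sgd_edges (sgd_coprod C1 C2)" "t \<in> sgd_edges (sgd_coprod C1 C2)" "u \<in> sgd_edges (sgd_coprod C1 C2)"
      and st: "sgd_src (sgd_coprod C1 C2) s = sgd_tgt (sgd_coprod C1 C2) t"
      and tu: "sgd_src (sgd_coprod C1 C2) t = sgd_tgt (sgd_coprod C1 C2) u"
    then show "sgd_cmp (sgd_coprod C1 C2) (sgd_cmp (sgd_coprod C1 C2) s t) u = sgd_cmp (sgd_coprod C1 C2) s (sgd_cmp (sgd_coprod C1 C2) t u)"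
      unfolding E using a1 a2 by (auto simp: src E2 sum_encode_eq)
  qed
qed

lemma fin_sgd_coprod: assumes "fin_sgd C1" "fin_sgd C2" shows "fin_sgd (sgd_coprod C1 C2)"
  using assms semigroupoid_coprod unfolding fin_sgd_def by (auto simp: sgd_coprod_def)


lemma div_as_elim:
  assumes "sgd_divides C (sg_as_sgd S)"
  obtains R where "\<forall>e\<in>sgd_edges C. R e \<noteq> {} \<and> R e \<subseteq> sg_carrier S"
    "\<forall>s\<in>sgd_edges C. \<forall>t\<in>sgd_edges C. sgd_src C s = sgd_tgt C t \<longrightarrow>
        (\<forall>f\<in>R s. \<forall>g\<in>R t. sg_mult S f g \<in> R (sgd_cmp C s t))"
    "\<forall>s\<in>sgd_edges C. \<forall>t\<in>sgd_edges C. sgd_src C s = sgd_src C t \<longrightarrow> sgd_tgt C s = sgd_tgt C t \<longrightarrow>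
        R s \<inter> R t \<noteq> {} \<longrightarrow> s = t"
proof -
  from assms obtain hv R where 
    r1: "\<forall>e\<in>sgd_edges C. R e \<noteq> {} \<and>
        R e \<subseteq> {f \<in> sgd_edges (sg_as_sgd S). sgd_src (sg_as_sgd S) f = hv (sgd_src C e) \<and> sgd_tgt (sg_as_sgd S) f = hv (sgd_tgt C e)}"
    and c1: "\<forall>s\<in>sgd_edges C. \<forall>t\<in>sgd_edges C. sgd_src C s = sgd_tgt C t \<longrightarrow>
        (\<forall>f\<in>R s. \<forall>g\<in>R t. sgd_cmp (sg_as_sgd S) f g \<in> R (sgd_cmp C s t))"
    and i1: "\<forall>s\<in>sgd_edges C. \<forall>t\<in>sgd_edges C. sgd_src C s = sgd_src C t \<longrightarrow> sgd_tgt C s = sgd_tgt C t \<longrightarrow>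
        R s \<inter> R t \<noteq> {} \<longrightarrow> s = t"
    unfolding sgd_divides_def by blast
  have "\<forall>e\<in>sgd_edges C. R e \<noteq> {} \<and> R e \<subseteq> sg_carrier S"
  proof
    fix e assume "e \<in> sgd_edges C"
    then have "R e \<noteq> {}" "R e \<subseteq> sgd_edges (sg_as_sgd S)" using r1 by blast+
    then show "R e \<noteq> {} \<and> R e \<subseteq> sg_carrier S" by (simp add: sg_as_sgd_def)
  qed
  moreover have "\<forall>s\<in>sgd_edges C. \<forall>t\<in>sgd_edges C. sgd_src C s = sgd_tgt C t \<longrightarrow>
        (\<forall>f\<in>R s. \<forall>g\<in>R t. sg_mult S f g \<in> R (sgd_cmp C s t))" using c1 by (simp add: sg_as_sgd_def)
  ultimately show ?thesis using that i1 by blast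
qed

lemma div_as_intro:
  assumes "\<forall>e\<in>sgd_edges C. R e \<noteq> {} \<and> R e \<subseteq> sg_carrier S"
    "\<forall>s\<in>sgd_edges C. \<forall>t\<in>sgd_edges C. sgd_src C s = sgd_tgt C t \<longrightarrow>
        (\<forall>f\<in>R s. \<forall>g\<in>R t. sg_mult S f g \<in> R (sgd_cmp C s t))"
    "\<forall>s\<in>sgd_edges C. \<forall>t\<in>sgd_edges C. sgd_src C s = sgd_src C t \<longrightarrow> sgd_tgt C s = sgd_tgt C t \<longrightarrow>
        R s \<inter> R t \<noteq> {} \<longrightarrow> s = t"
  shows "sgd_divides C (sg_as_sgd S)"
  unfolding sgd_divides_def
  apply (rule exI[of _ "\<lambda>_. 0"], rule exI[of _ R])
  using assms by (auto simp: sg_as_sgd_def)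

lemma div_prod:
  assumes d1: "sgd_divides C1 (sg_as_sgd S1)" and d2: "sgd_divides C2 (sg_as_sgd S2)"
  shows "sgd_divides (sgd_prod C1 C2) (sg_as_sgd (sg_prod S1 S2))"
proof -
  obtain R1 where r1: "\<forall>e\<in>sgd_edges C1. R1 e \<noteq> {} \<and> R1 e \<subseteq> sg_carrier S1"
    and c1: "\<forall>s\<in>sgd_edges C1. \<forall>t\<in>sgd_edges C1. sgd_src C1 s = sgd_tgt C1 t \<longrightarrow>
        (\<forall>f\<in>R1 s. \<forall>g\<in>R1 t. sg_mult S1 f g \<in> R1 (sgd_cmp C1 s t))"
    and i1: "\<forall>s\<in>sgd_edges C1. \<forall>t\<in>sgd_edges C1. sgd_src C1 s = sgd_src C1 t \<longrightarrow> sgd_tgt C1 s = sgd_tgt C1 t \<longrightarrow>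
        R1 s \<inter> R1 t \<noteq> {} \<longrightarrow> s = t" using div_as_elim[OF d1] by blast
  obtain R2 where r2: "\<forall>e\<in>sgd_edges C2. R2 e \<noteq> {} \<and> R2 e \<subseteq> sg_carrier S2"
    and c2: "\<forall>s\<in>sgd_edges C2. \<forall>t\<in>sgd_edges C2. sgd_src C2 s = sgd_tgt C2 t \<longrightarrow>
        (\<forall>f\<in>R2 s. \<forall>g\<in>R2 t. sg_mult S2 f g \<in> R2 (sgd_cmp C2 s t))"
    and i2: "\<forall>s\<in>sgd_edges C2. \<forall>t\<in>sgd_edges C2. sgd_src C2 s = sgd_src C2 t \<longrightarrow> sgd_tgt C2 s = sgd_tgt C2 t \<longrightarrow>
        R2 s \<inter> R2 t \<noteq> {} \<longrightarrow> s = t" using div_as_elim[OF d2] by blast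
  define R where "R e = (case prod_decode e of (a, b) \<Rightarrow> prod_encode ` (R1 a \<times> R2 b))" for e
  have Renc: "R (prod_encode (a,b)) = prod_encode ` (R1 a \<times> R2 b)" for a b by (simp add: R_def)
  have E: "e \<in> sgd_edges (sgd_prod C1 C2) \<longleftrightarrow> (\<exists>a b. e = prod_encode (a,b) \<and> a \<in> sgd_edges C1 \<and> b \<in> sgd_edges C2)" for e
    by (auto simp: sgd_prod_def)
  have P: "sgd_src (sgd_prod C1 C2) (prod_encode (a,b)) = prod_encode (sgd_src C1 a, sgd_src C2 b)"
    "sgd_tgt (sgd_prod C1 C2) (prod_encode (a,b)) = prod_encode (sgd_tgt C1 a, sgd_tgt C2 b)"
    "sgd_cmp (sgd_prod C1 C2) (prod_encode (a,b)) (prod_encode (c,d)) = prod_encode (sgd_cmp C1 a c, sgd_cmp C2 b d)"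
    for a b c d by (simp_all add: sgd_prod_def)
  have M: "sg_mult (sg_prod S1 S2) (prod_encode (a,b)) (prod_encode (c,d)) = prod_encode (sg_mult S1 a c, sg_mult S2 b d)"
    "sg_carrier (sg_prod S1 S2) = prod_encode ` (sg_carrier S1 \<times> sg_carrier S2)"
    for a b c d by (simp_all add: sg_prod_def)
  have E: "\<And>e P. e \<in> sgd_edges (sgd_prod C1 C2) \<Longrightarrow> (\<And>a b. e = prod_encode (a,b) \<Longrightarrow> a \<in> sgd_edges C1 \<Longrightarrow> b \<in> sgd_edges C2 \<Longrightarrow> P) \<Longrightarrow> P"
    by (auto simp: sgd_prod_def)
  show ?thesis
  proof (rule div_as_intro[where R = R]; intro ballI impI conjI)
    fix e assume "e \<in> sgd_edges (sgd_prod C1 C2)"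
    then obtain a b where ab: "e = prod_encode (a,b)" "a \<in> sgd_edges C1" "b \<in> sgd_edges C2" by (rule E)
    then have "R1 a \<noteq> {}" "R1 a \<subseteq> sg_carrier S1" "R2 b \<noteq> {}" "R2 b \<subseteq> sg_carrier S2" using r1 r2 by blast+
    then show "R e \<noteq> {}" "R e \<subseteq> sg_carrier (sg_prod S1 S2)" using ab(1) by (auto simp: Renc M)
  next
    fix s t f g
    assume "s \<in> sgd_edges (sgd_prod C1 C2)" "t \<in> sgd_edges (sgd_prod C1 C2)"
      and st: "sgd_src (sgd_prod C1 C2) s = sgd_tgt (sgd_prod C1 C2) t"
      and f: "f \<in> R s" and g: "g \<in> R t"
    obtain a b where ab: "s = prod_encode (a,b)" "a \<in> sgd_edges C1" "b \<in> sgd_edges C2" using \<open>s \<in> sgd_edges (sgd_prod C1 C2)\<close> by (rule E)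
    obtain c d where cd: "t = prod_encode (c,d)" "c \<in> sgd_edges C1" "d \<in> sgd_edges C2" using \<open>t \<in> sgd_edges (sgd_prod C1 C2)\<close> by (rule E)
    from st have st1: "sgd_src C1 a = sgd_tgt C1 c" and st2: "sgd_src C2 b = sgd_tgt C2 d" by (simp_all add: P ab cd)
    from f g obtain f1 f2 g1 g2 where fg: "f = prod_encode (f1,f2)" "f1 \<in> R1 a" "f2 \<in> R2 b"
      "g = prod_encode (g1,g2)" "g1 \<in> R1 c" "g2 \<in> R2 d" by (auto simp: Renc ab cd)
    have "sg_mult S1 f1 g1 \<in> R1 (sgd_cmp C1 a c)" using c1 ab cd st1 fg by blast
    moreover have "sg_mult S2 f2 g2 \<in> R2 (sgd_cmp C2 b d)" using c2 ab cd st2 fg by blast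
    ultimately show "sg_mult (sg_prod S1 S2) f g \<in> R (sgd_cmp (sgd_prod C1 C2) s t)"
      by (simp add: fg M P Renc ab cd)
  next
    fix s t
    assume "s \<in> sgd_edges (sgd_prod C1 C2)" "t \<in> sgd_edges (sgd_prod C1 C2)"
      and ss: "sgd_src (sgd_prod C1 C2) s = sgd_src (sgd_prod C1 C2) t"
      and tt: "sgd_tgt (sgd_prod C1 C2) s = sgd_tgt (sgd_prod C1 C2) t"
      and x: "R s \<inter> R t \<noteq> {}"
    obtain a b where ab: "s = prod_encode (a,b)" "a \<in> sgd_edges C1" "b \<in> sgd_edges C2" using \<open>s \<in> sgd_edges (sgd_prod C1 C2)\<close> by (rule E)
    obtain c d where cd: "t = prod_encode (c,d)" "c \<in> sgd_edges C1" "d \<in> sgd_edges C2" using \<open>t \<in> sgd_edges (sgd_prod C1 C2)\<close> by (rule E)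
    from ss tt have e: "sgd_src C1 a = sgd_src C1 c" "sgd_src C2 b = sgd_src C2 d"
      "sgd_tgt C1 a = sgd_tgt C1 c" "sgd_tgt C2 b = sgd_tgt C2 d" by (simp_all add: P ab cd)
    from x obtain x1 x2 where "x1 \<in> R1 a" "x1 \<in> R1 c" "x2 \<in> R2 b" "x2 \<in> R2 d" by (auto simp: Renc ab cd)
    then have "R1 a \<inter> R1 c \<noteq> {}" "R2 b \<inter> R2 d \<noteq> {}" by blast+
    then have "a = c" "b = d" using i1[rule_format, OF ab(2) cd(2) e(1) e(3)] i2[rule_format, OF ab(3) cd(3) e(2) e(4)] by simp_all
    then show "s = t" by (simp add: ab cd)
  qed
qed


lemma div_coprod:
  assumes d1: "sgd_divides C1 (sg_as_sgd S1)" and d2: "sgd_divides C2 (sg_as_sgd S2)"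
    and f1: "fin_sg S1" and f2: "fin_sg S2"
  shows "sgd_divides (sgd_coprod C1 C2) (sg_as_sgd (sg_prod S1 S2))"
proof -
  obtain R1 where r1: "\<forall>e\<in>sgd_edges C1. R1 e \<noteq> {} \<and> R1 e \<subseteq> sg_carrier S1"
    and c1: "\<forall>s\<in>sgd_edges C1. \<forall>t\<in>sgd_edges C1. sgd_src C1 s = sgd_tgt C1 t \<longrightarrow>
        (\<forall>f\<in>R1 s. \<forall>g\<in>R1 t. sg_mult S1 f g \<in> R1 (sgd_cmp C1 s t))"
    and i1: "\<forall>s\<in>sgd_edges C1. \<forall>t\<in>sgd_edges C1. sgd_src C1 s = sgd_src C1 t \<longrightarrow> sgd_tgt C1 s = sgd_tgt C1 t \<longrightarrow>
        R1 s \<inter> R1 t \<noteq> {} \<longrightarrow> s = t" using div_as_elim[OF d1] by blast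
  obtain R2 where r2: "\<forall>e\<in>sgd_edges C2. R2 e \<noteq> {} \<and> R2 e \<subseteq> sg_carrier S2"
    and c2: "\<forall>s\<in>sgd_edges C2. \<forall>t\<in>sgd_edges C2. sgd_src C2 s = sgd_tgt C2 t \<longrightarrow>
        (\<forall>f\<in>R2 s. \<forall>g\<in>R2 t. sg_mult S2 f g \<in> R2 (sgd_cmp C2 s t))"
    and i2: "\<forall>s\<in>sgd_edges C2. \<forall>t\<in>sgd_edges C2. sgd_src C2 s = sgd_src C2 t \<longrightarrow> sgd_tgt C2 s = sgd_tgt C2 t \<longrightarrow>
        R2 s \<inter> R2 t \<noteq> {} \<longrightarrow> s = t" using div_as_elim[OF d2] by blast
  have cl1: "\<forall>x\<in>sg_carrier S1. \<forall>y\<in>sg_carrier S1. sg_mult S1 x y \<in> sg_carrier S1" "sg_carrier S1 \<noteq> {}"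
    using f1 unfolding fin_sg_def by blast+
  have cl2: "\<forall>x\<in>sg_carrier S2. \<forall>y\<in>sg_carrier S2. sg_mult S2 x y \<in> sg_carrier S2" "sg_carrier S2 \<noteq> {}"
    using f2 unfolding fin_sg_def by blast+
  define R where "R e = (case sum_decode e of Inl a \<Rightarrow> prod_encode ` (R1 a \<times> sg_carrier S2)
     | Inr b \<Rightarrow> prod_encode ` (sg_carrier S1 \<times> R2 b))" for e
  have Renc: "R (sum_encode (Inl a)) = prod_encode ` (R1 a \<times> sg_carrier S2)"
     "R (sum_encode (Inr b)) = prod_encode ` (sg_carrier S1 \<times> R2 b)" for a b by (simp_all add: R_def)
  have E: "\<And>e P. e \<in> sgd_edges (sgd_coprod C1 C2) \<Longrightarrow> (\<And>a. e = sum_encode (Inl a) \<Longrightarrow> a \<in> sgd_edges C1 \<Longrightarrow> P)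
     \<Longrightarrow> (\<And>b. e = sum_encode (Inr b) \<Longrightarrow> b \<in> sgd_edges C2 \<Longrightarrow> P) \<Longrightarrow> P"
    by (auto simp: sgd_coprod_def)
  have P: "sgd_src (sgd_coprod C1 C2) (sum_encode (Inl a)) = sum_encode (Inl (sgd_src C1 a))"
     "sgd_src (sgd_coprod C1 C2) (sum_encode (Inr b)) = sum_encode (Inr (sgd_src C2 b))"
     "sgd_tgt (sgd_coprod C1 C2) (sum_encode (Inl a)) = sum_encode (Inl (sgd_tgt C1 a))"
     "sgd_tgt (sgd_coprod C1 C2) (sum_encode (Inr b)) = sum_encode (Inr (sgd_tgt C2 b))"
     "sgd_cmp (sgd_coprod C1 C2) (sum_encode (Inl a)) (sum_encode (Inl c)) = sum_encode (Inl (sgd_cmp C1 a c))"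
     "sgd_cmp (sgd_coprod C1 C2) (sum_encode (Inr b)) (sum_encode (Inr d)) = sum_encode (Inr (sgd_cmp C2 b d))"
     for a b c d by (simp_all add: sgd_coprod_def)
  have M: "sg_mult (sg_prod S1 S2) (prod_encode (a,b)) (prod_encode (c,d)) = prod_encode (sg_mult S1 a c, sg_mult S2 b d)"
    "sg_carrier (sg_prod S1 S2) = prod_encode ` (sg_carrier S1 \<times> sg_carrier S2)"
    for a b c d by (simp_all add: sg_prod_def)
  show ?thesis
  proof (rule div_as_intro[where R = R]; intro ballI impI)
    fix e assume "e \<in> sgd_edges (sgd_coprod C1 C2)"
    then show "R e \<noteq> {} \<and> R e \<subseteq> sg_carrier (sg_prod S1 S2)"
    proof (rule E)
      fix a assume "e = sum_encode (Inl a)" "a \<in> sgd_edges C1"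
      then have "R1 a \<noteq> {}" "R1 a \<subseteq> sg_carrier S1" using r1 by blast+
      then show ?thesis using cl2 \<open>e = _\<close> by (auto simp: Renc M)
    next
      fix b assume "e = sum_encode (Inr b)" "b \<in> sgd_edges C2"
      then have "R2 b \<noteq> {}" "R2 b \<subseteq> sg_carrier S2" using r2 by blast+
      then show ?thesis using cl1 \<open>e = _\<close> by (auto simp: Renc M)
    qed
  next
    fix s t f g
    assume s: "s \<in> sgd_edges (sgd_coprod C1 C2)" and t: "t \<in> sgd_edges (sgd_coprod C1 C2)"
      and st: "sgd_src (sgd_coprod C1 C2) s = sgd_tgt (sgd_coprod C1 C2) t"
      and f: "f \<in> R s" and g: "g \<in> R t"
    show "sg_mult (sg_prod S1 S2) f g \<in> R (sgd_cmp (sgd_coprod C1 C2) s t)"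
      using s
    proof (rule E)
      fix a assume a: "s = sum_encode (Inl a)" "a \<in> sgd_edges C1"
      show ?thesis using t
      proof (rule E)
        fix c assume c: "t = sum_encode (Inl c)" "c \<in> sgd_edges C1"
        from st have st1: "sgd_src C1 a = sgd_tgt C1 c" by (simp add: P a c sum_encode_eq)
        from f g obtain f1 f2 g1 g2 where fg: "f = prod_encode (f1,f2)" "f1 \<in> R1 a" "f2 \<in> sg_carrier S2"
          "g = prod_encode (g1,g2)" "g1 \<in> R1 c" "g2 \<in> sg_carrier S2" by (auto simp: Renc a c)
        have "sg_mult S1 f1 g1 \<in> R1 (sgd_cmp C1 a c)" using c1 a c st1 fg by blast
        moreover have "sg_mult S2 f2 g2 \<in> sg_carrier S2" using cl2 fg by blast
        ultimately show ?thesis by (simp add: fg M P Renc a c)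
      next
        fix d assume d: "t = sum_encode (Inr d)" "d \<in> sgd_edges C2"
        from st show ?thesis by (simp add: P a d sum_encode_eq)
      qed
    next
      fix b assume b: "s = sum_encode (Inr b)" "b \<in> sgd_edges C2"
      show ?thesis using t
      proof (rule E)
        fix c assume c: "t = sum_encode (Inl c)" "c \<in> sgd_edges C1"
        from st show ?thesis by (simp add: P b c sum_encode_eq)
      next
        fix d assume d: "t = sum_encode (Inr d)" "d \<in> sgd_edges C2"
        from st have st2: "sgd_src C2 b = sgd_tgt C2 d" by (simp add: P b d sum_encode_eq)
        from f g obtain f1 f2 g1 g2 where fg: "f = prod_encode (f1,f2)" "f2 \<in> R2 b" "f1 \<in> sg_carrier S1"
          "g = prod_encode (g1,g2)" "g2 \<in> R2 d" "g1 \<in> sg_carrier S1" by (auto simp: Renc b d)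
        have "sg_mult S2 f2 g2 \<in> R2 (sgd_cmp C2 b d)" using c2 b d st2 fg by blast
        moreover have "sg_mult S1 f1 g1 \<in> sg_carrier S1" using cl1 fg by blast
        ultimately show ?thesis by (simp add: fg M P Renc b d)
      qed
    qed
  next
    fix s t
    assume s: "s \<in> sgd_edges (sgd_coprod C1 C2)" and t: "t \<in> sgd_edges (sgd_coprod C1 C2)"
      and ss: "sgd_src (sgd_coprod C1 C2) s = sgd_src (sgd_coprod C1 C2) t"
      and tt: "sgd_tgt (sgd_coprod C1 C2) s = sgd_tgt (sgd_coprod C1 C2) t"
      and x: "R s \<inter> R t \<noteq> {}"
    show "s = t" using s
    proof (rule E)
      fix a assume a: "s = sum_encode (Inl a)" "a \<in> sgd_edges C1"
      show ?thesis using t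
      proof (rule E)
        fix c assume c: "t = sum_encode (Inl c)" "c \<in> sgd_edges C1"
        from ss tt have e: "sgd_src C1 a = sgd_src C1 c" "sgd_tgt C1 a = sgd_tgt C1 c" by (simp_all add: P a c sum_encode_eq)
        from x obtain x1 where "x1 \<in> R1 a" "x1 \<in> R1 c" by (auto simp: Renc a c)
        then have "R1 a \<inter> R1 c \<noteq> {}" by blast
        then have "a = c" using i1[rule_format, OF a(2) c(2) e] by simp
        then show ?thesis by (simp add: a c)
      next
        fix d assume d: "t = sum_encode (Inr d)" "d \<in> sgd_edges C2"
        from ss show ?thesis by (simp add: P a d sum_encode_eq)
      qed
    next
      fix b assume b: "s = sum_encode (Inr b)" "b \<in> sgd_edges C2"
      show ?thesis using t
      proof (rule E)
        fix c assume c: "t = sum_encode (Inl c)" "c \<in> sgd_edges C1"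
        from ss show ?thesis by (simp add: P b c sum_encode_eq)
      next
        fix d assume d: "t = sum_encode (Inr d)" "d \<in> sgd_edges C2"
        from ss tt have e: "sgd_src C2 b = sgd_src C2 d" "sgd_tgt C2 b = sgd_tgt C2 d" by (simp_all add: P b d sum_encode_eq)
        from x obtain x2 where "x2 \<in> R2 b" "x2 \<in> R2 d" by (auto simp: Renc b d)
        then have "R2 b \<inter> R2 d \<noteq> {}" by blast
        then have "b = d" using i2[rule_format, OF b(2) d(2) e] by simp
        then show ?thesis by (simp add: b d)
      qed
    qed
  qed
qed


definition DivV :: "nat sgrp set \<Rightarrow> (nat, nat) sgd set" where
  "DivV V = {C. fin_sgd C \<and> (\<exists>S\<in>V. sgd_divides C (sg_as_sgd S))}"

lemma DivV_pv:
  assumes V: "sg_pseudovariety V"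
  shows "sgd_pseudovariety (DivV V)" "sg_as_sgd ` V \<subseteq> DivV V"
proof -
  have finV: "\<And>S. S \<in> V \<Longrightarrow> fin_sg S" and triv: "sg_trivial \<in> V"
    and prodV: "\<And>S T. S \<in> V \<Longrightarrow> T \<in> V \<Longrightarrow> sg_prod S T \<in> V"
    using V unfolding sg_pseudovariety_def by blast+
  show "sg_as_sgd ` V \<subseteq> DivV V"
    unfolding DivV_def using finV fin_sgd_as div_refl_as by blast
  show "sgd_pseudovariety (DivV V)"
    unfolding sgd_pseudovariety_def
  proof (intro conjI allI ballI impI)
    show "\<And>S. S \<in> DivV V \<Longrightarrow> fin_sgd (S :: (nat,nat) sgd)" unfolding DivV_def by blast
  next
    fix S :: "(nat,nat) sgd" and T assume "T \<in> DivV V" "fin_sgd S" "sgd_divides S T"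
    then show "S \<in> DivV V" unfolding DivV_def using div_trans by blast
  next
    show "sgd_trivial \<in> DivV V" unfolding DivV_def using fin_sgd_trivial div_trivial triv by blast
  next
    fix S T assume "S \<in> DivV V" "T \<in> DivV V"
    then obtain S1 S2 where "S1 \<in> V" "S2 \<in> V" "sgd_divides S (sg_as_sgd S1)" "sgd_divides T (sg_as_sgd S2)"
      "fin_sgd S" "fin_sgd T" unfolding DivV_def by blast
    then show "sgd_prod S T \<in> DivV V" unfolding DivV_def using fin_sgd_prod div_prod prodV by blast
  next
    show "sgd_empty \<in> DivV V" unfolding DivV_def using fin_sgd_empty div_empty triv by blast
  next
    fix S T assume "S \<in> DivV V" "T \<in> DivV V"
    then obtain S1 S2 where "S1 \<in> V" "S2 \<in> V" "sgd_divides S (sg_as_sgd S1)" "sgd_divides T (sg_as_sgd S2)"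
      "fin_sgd S" "fin_sgd T" unfolding DivV_def by blast
    then show "sgd_coprod S T \<in> DivV V" unfolding DivV_def using fin_sgd_coprod div_coprod prodV finV by blast
  qed
qed

lemma gv_div:
  assumes "sg_pseudovariety V" "C \<in> global_pv V"
  shows "\<exists>S\<in>V. sgd_divides C (sg_as_sgd S)"
proof -
  have "global_pv V \<subseteq> DivV V" unfolding global_pv_def using DivV_pv[OF assms(1)] by blast
  then show ?thesis using assms(2) unfolding DivV_def by blast
qed

lemma as_in_gv: "S \<in> V \<Longrightarrow> sg_as_sgd S \<in> global_pv V"
  unfolding global_pv_def by blast



lemma is_path_single: "is_path A [e] \<longleftrightarrow> e \<in> gr_edges A"
  unfolding is_path_def by auto

lemma is_path_Cons:
  assumes "w \<noteq> []"
  shows "is_path A (e # w) \<longleftrightarrow> e \<in> gr_edges A \<and> is_path A w \<and> gr_src A e = gr_tgt A (hd w)"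
proof
  assume p: "is_path A (e # w)"
  then have a: "set (e#w) \<subseteq> gr_edges A" and b: "\<forall>i. Suc i < length (e#w) \<longrightarrow> gr_src A ((e#w) ! i) = gr_tgt A ((e#w) ! Suc i)"
    unfolding is_path_def by blast+
  have "gr_src A e = gr_tgt A (hd w)" using b[rule_format, of 0] assms by (simp add: hd_conv_nth)
  moreover have "\<forall>i. Suc i < length w \<longrightarrow> gr_src A (w ! i) = gr_tgt A (w ! Suc i)"
  proof (intro allI impI)
    fix i assume "Suc i < length w"
    then show "gr_src A (w ! i) = gr_tgt A (w ! Suc i)" using b[rule_format, of "Suc i"] by simp
  qed
  ultimately show "e \<in> gr_edges A \<and> is_path A w \<and> gr_src A e = gr_tgt A (hd w)"
    using a assms unfolding is_path_def by simp
next
  assume r: "e \<in> gr_edges A \<and> is_path A w \<and> gr_src A e = gr_tgt A (hd w)"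
  have "\<forall>i. Suc i < length (e#w) \<longrightarrow> gr_src A ((e#w) ! i) = gr_tgt A ((e#w) ! Suc i)"
  proof (intro allI impI)
    fix i assume i: "Suc i < length (e#w)"
    show "gr_src A ((e#w) ! i) = gr_tgt A ((e#w) ! Suc i)"
    proof (cases i)
      case 0 then show ?thesis using r assms by (simp add: hd_conv_nth)
    next
      case (Suc j) then show ?thesis using r i unfolding is_path_def by simp
    qed
  qed
  then show "is_path A (e # w)" using r unfolding is_path_def by simp
qed

lemma is_path_append:
  assumes "u \<noteq> []" "v \<noteq> []"
  shows "is_path A (u @ v) \<longleftrightarrow> is_path A u \<and> is_path A v \<and> gr_src A (last u) = gr_tgt A (hd v)"
  using assms(1)
proof (induction u)
  case Nil then show ?case by simp
next
  case (Cons e u)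
  show ?case
  proof (cases "u = []")
    case True then show ?thesis using assms(2) by (simp add: is_path_Cons is_path_single)
  next
    case False
    then show ?thesis using Cons.IH assms(2) by (auto simp: is_path_Cons)
  qed
qed

lemma is_path_words: "is_path A w \<Longrightarrow> w \<in> words_plus (gr_edges A)"
  unfolding is_path_def words_plus_def by auto

fun lift :: "('e \<Rightarrow> nat) \<Rightarrow> (nat \<Rightarrow> nat \<Rightarrow> nat) \<Rightarrow> 'e list \<Rightarrow> nat" where
  "lift \<sigma> m [] = 0"
| "lift \<sigma> m [e] = \<sigma> e"
| "lift \<sigma> m (e # f # w) = m (\<sigma> e) (lift \<sigma> m (f # w))"

lemma lift_Cons: "w \<noteq> [] \<Longrightarrow> lift \<sigma> m (e # w) = m (\<sigma> e) (lift \<sigma> m w)"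
  by (cases w) auto

lemma lift_carrier:
  assumes "fin_sg S" "\<forall>e\<in>E. \<sigma> e \<in> sg_carrier S" "w \<in> words_plus E"
  shows "lift \<sigma> (sg_mult S) w \<in> sg_carrier S"
  using assms(3)
proof (induction w)
  case Nil then show ?case by (simp add: words_plus_def)
next
  case (Cons e w)
  show ?case
  proof (cases "w = []")
    case True then show ?thesis using Cons.prems assms(2) by (simp add: words_plus_def)
  next
    case False
    then have "w \<in> words_plus E" "e \<in> E" using Cons.prems by (auto simp: words_plus_def)
    then show ?thesis using Cons.IH False assms(1,2) by (simp add: lift_Cons fin_sg_def)
  qed
qed

lemma lift_append:
  assumes "fin_sg S" "\<forall>e\<in>E. \<sigma> e \<in> sg_carrier S" "u \<in> words_plus E" "v \<in> words_plus E"
  shows "lift \<sigma> (sg_mult S) (u @ v) = sg_mult S (lift \<sigma> (sg_mult S) u) (lift \<sigma> (sg_mult S) v)"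
  using assms(3)
proof (induction u)
  case Nil then show ?case by (simp add: words_plus_def)
next
  case (Cons e u)
  have v: "v \<noteq> []" using assms(4) by (simp add: words_plus_def)
  show ?case
  proof (cases "u = []")
    case True then show ?thesis using v by (simp add: lift_Cons)
  next
    case False
    then have u: "u \<in> words_plus E" and e: "e \<in> E" using Cons.prems by (auto simp: words_plus_def)
    have c: "lift \<sigma> (sg_mult S) u \<in> sg_carrier S" "lift \<sigma> (sg_mult S) v \<in> sg_carrier S" "\<sigma> e \<in> sg_carrier S"
      using lift_carrier[OF assms(1,2)] u assms(4) e assms(2) by auto
    have "lift \<sigma> (sg_mult S) ((e # u) @ v) = sg_mult S (\<sigma> e) (lift \<sigma> (sg_mult S) (u @ v))"
      using False by (simp add: lift_Cons)
    also have "\<dots> = sg_mult S (\<sigma> e) (sg_mult S (lift \<sigma> (sg_mult S) u) (lift \<sigma> (sg_mult S) v))"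
      using Cons.IH u by simp
    also have "\<dots> = sg_mult S (sg_mult S (\<sigma> e) (lift \<sigma> (sg_mult S) u)) (lift \<sigma> (sg_mult S) v)"
      using assms(1) c unfolding fin_sg_def by metis
    also have "\<dots> = sg_mult S (lift \<sigma> (sg_mult S) (e # u)) (lift \<sigma> (sg_mult S) v)"
      using False by (simp add: lift_Cons)
    finally show ?thesis .
  qed
qed



lemma free_simps:
  "sgd_edges (free_sgd A) = {w. is_path A w}"
  "sgd_verts (free_sgd A) = gr_verts A"
  "sgd_src (free_sgd A) w = gr_src A (last w)"
  "sgd_tgt (free_sgd A) w = gr_tgt A (hd w)"
  "sgd_cmp (free_sgd A) u v = u @ v"
  by (simp_all add: free_sgd_def)

lemma lift_exists:
  assumes hom: "sgd_hom (free_sgd A) F hv he" and div: "sgd_divides F (sg_as_sgd S)" and fin: "fin_sg S"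
  shows "\<exists>\<phi>. (\<forall>w\<in>words_plus (gr_edges A). \<phi> w \<in> sg_carrier S) \<and>
    (\<forall>u\<in>words_plus (gr_edges A). \<forall>v\<in>words_plus (gr_edges A). \<phi> (u @ v) = sg_mult S (\<phi> u) (\<phi> v)) \<and>
    (\<forall>w u. is_path A w \<longrightarrow> is_path A u \<longrightarrow> \<phi> w = \<phi> u \<longrightarrow> gr_src A (last w) = gr_src A (last u) \<longrightarrow>
       gr_tgt A (hd w) = gr_tgt A (hd u) \<longrightarrow> he w = he u)"
proof -
  obtain R where r1: "\<forall>e\<in>sgd_edges F. R e \<noteq> {} \<and> R e \<subseteq> sg_carrier S"
    and c1: "\<forall>s\<in>sgd_edges F. \<forall>t\<in>sgd_edges F. sgd_src F s = sgd_tgt F t \<longrightarrow>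
        (\<forall>f\<in>R s. \<forall>g\<in>R t. sg_mult S f g \<in> R (sgd_cmp F s t))"
    and i1: "\<forall>s\<in>sgd_edges F. \<forall>t\<in>sgd_edges F. sgd_src F s = sgd_src F t \<longrightarrow> sgd_tgt F s = sgd_tgt F t \<longrightarrow>
        R s \<inter> R t \<noteq> {} \<longrightarrow> s = t" using div_as_elim[OF div] by blast
  have H1: "\<And>w. is_path A w \<Longrightarrow> he w \<in> sgd_edges F \<and> sgd_src F (he w) = hv (gr_src A (last w)) \<and>
      sgd_tgt F (he w) = hv (gr_tgt A (hd w))"
    using hom unfolding sgd_hom_def by (simp add: free_simps)
  have H2: "\<And>s t. is_path A s \<Longrightarrow> is_path A t \<Longrightarrow> gr_src A (last s) = gr_tgt A (hd t) \<Longrightarrow>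
      he (s @ t) = sgd_cmp F (he s) (he t)"
    using hom unfolding sgd_hom_def by (simp add: free_simps)
  define \<sigma> where "\<sigma> e = (SOME f. f \<in> R (he [e]))" for e
  have \<sigma>R: "\<sigma> e \<in> R (he [e])" and \<sigma>C: "\<sigma> e \<in> sg_carrier S" if "e \<in> gr_edges A" for e
  proof -
    have "he [e] \<in> sgd_edges F" using H1[of "[e]"] that by (simp add: is_path_single)
    then have "R (he [e]) \<noteq> {}" "R (he [e]) \<subseteq> sg_carrier S" using r1 by blast+
    then show "\<sigma> e \<in> R (he [e])" unfolding \<sigma>_def by (simp add: some_in_eq)
    then show "\<sigma> e \<in> sg_carrier S" using \<open>R (he [e]) \<subseteq> _\<close> by blast
  qed
  define \<phi> where "\<phi> = lift \<sigma> (sg_mult S)"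
  have inR: "is_path A w \<Longrightarrow> \<phi> w \<in> R (he w)" for w
  proof (induction w)
    case Nil then show ?case by (simp add: is_path_def)
  next
    case (Cons e w)
    show ?case
    proof (cases "w = []")
      case True then show ?thesis using Cons.prems \<sigma>R by (simp add: \<phi>_def is_path_single)
    next
      case False
      have pp: "e \<in> gr_edges A \<and> is_path A w \<and> gr_src A e = gr_tgt A (hd w)"
        using Cons.prems is_path_Cons[OF False] by blast
      then have p: "e \<in> gr_edges A" "is_path A w" "gr_src A e = gr_tgt A (hd w)" by blast+
      have pe: "is_path A [e]" using p by (simp add: is_path_single)
      have eq: "he (e # w) = sgd_cmp F (he [e]) (he w)" using H2[OF pe p(2)] p(3) by simp
      have "he [e] \<in> sgd_edges F" "he w \<in> sgd_edges F" "sgd_src F (he [e]) = sgd_tgt F (he w)"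
        using H1[OF pe] H1[OF p(2)] p(3) by simp_all
      then have "sg_mult S (\<sigma> e) (\<phi> w) \<in> R (sgd_cmp F (he [e]) (he w))"
        using c1[rule_format] \<sigma>R[OF p(1)] Cons.IH[OF p(2)] by simp
      then show ?thesis using False eq by (simp add: \<phi>_def lift_Cons)
    qed
  qed
  have sC: "\<forall>e\<in>gr_edges A. \<sigma> e \<in> sg_carrier S" using \<sigma>C by blast
  show ?thesis
  proof (intro exI[of _ \<phi>] conjI ballI allI impI)
    show "w \<in> words_plus (gr_edges A) \<Longrightarrow> \<phi> w \<in> sg_carrier S" for w
      unfolding \<phi>_def using lift_carrier[OF fin sC] by blast
    show "u \<in> words_plus (gr_edges A) \<Longrightarrow> v \<in> words_plus (gr_edges A) \<Longrightarrow> \<phi> (u @ v) = sg_mult S (\<phi> u) (\<phi> v)" for u v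
      unfolding \<phi>_def using lift_append[OF fin sC] by blast
  next
    fix w u assume w: "is_path A w" and u: "is_path A u" and eq: "\<phi> w = \<phi> u"
      and s: "gr_src A (last w) = gr_src A (last u)" and t: "gr_tgt A (hd w) = gr_tgt A (hd u)"
    have "R (he w) \<inter> R (he u) \<noteq> {}" using inR[OF w] inR[OF u] eq by auto
    moreover have "he w \<in> sgd_edges F" "he u \<in> sgd_edges F" "sgd_src F (he w) = sgd_src F (he u)"
      "sgd_tgt F (he w) = sgd_tgt F (he u)" using H1[OF w] H1[OF u] s t by simp_all
    ultimately show "he w = he u" using i1[rule_format] by simp
  qed
qed



lemma sat:
  assumes "L = {w \<in> words_plus A. \<phi> w \<in> \<phi> ` L}" "w \<in> words_plus A" "u \<in> words_plus A" "\<phi> w = \<phi> u"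
  shows "w \<in> L \<longleftrightarrow> u \<in> L"
proof
  assume "w \<in> L" then have "\<phi> u \<in> \<phi> ` L" using assms(4) by (metis imageI)
  then show "u \<in> L" using assms(1,3) by blast
next
  assume "u \<in> L" then have "\<phi> w \<in> \<phi> ` L" using assms(4) by (metis imageI)
  then show "w \<in> L" using assms(1,2) by blast
qed

lemma rec_hom:
  assumes "S \<in> V" "\<forall>w\<in>words_plus A. \<phi> w \<in> sg_carrier S"
    "\<forall>u\<in>words_plus A. \<forall>v\<in>words_plus A. \<phi> (u @ v) = sg_mult S (\<phi> u) (\<phi> v)"
    "X \<subseteq> words_plus A"
  shows "sg_recognizable V A {w \<in> words_plus A. \<phi> w \<in> \<phi> ` X}"
  unfolding sg_recognizable_def
  apply (intro conjI, blast)
  apply (rule bexI[OF _ assms(1)], rule exI[of _ \<phi>])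
  using assms(2,3,4) by auto

lemma rec_empty: "sg_pseudovariety V \<Longrightarrow> sg_recognizable V A {}"
  unfolding sg_recognizable_def sg_pseudovariety_def
  by (intro conjI, simp, rule bexI[of _ sg_trivial], rule exI[of _ "\<lambda>_. 0"]) (auto simp: sg_trivial_def)

lemma rec_all: "sg_pseudovariety V \<Longrightarrow> sg_recognizable V A (words_plus A)"
  unfolding sg_recognizable_def sg_pseudovariety_def
  by (intro conjI, simp, rule bexI[of _ sg_trivial], rule exI[of _ "\<lambda>_. 0"]) (auto simp: sg_trivial_def)

lemma rec_combine:
  assumes V: "sg_pseudovariety V" and r1: "sg_recognizable V A L1" and r2: "sg_recognizable V A L2"
    and X: "X \<subseteq> words_plus A"
    and c: "\<And>w u. w \<in> words_plus A \<Longrightarrow> u \<in> words_plus A \<Longrightarrow> (w \<in> L1 \<longleftrightarrow> u \<in> L1) \<Longrightarrow> (w \<in> L2 \<longleftrightarrow> u \<in> L2) \<Longrightarrow> (w \<in> X \<longleftrightarrow> u \<in> X)"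
  shows "sg_recognizable V A X"
proof -
  obtain S1 \<phi>1 where S1: "S1 \<in> V" "\<forall>w\<in>words_plus A. \<phi>1 w \<in> sg_carrier S1"
    "\<forall>u\<in>words_plus A. \<forall>v\<in>words_plus A. \<phi>1 (u @ v) = sg_mult S1 (\<phi>1 u) (\<phi>1 v)"
    "L1 = {w \<in> words_plus A. \<phi>1 w \<in> \<phi>1 ` L1}" using r1 unfolding sg_recognizable_def by blast
  obtain S2 \<phi>2 where S2: "S2 \<in> V" "\<forall>w\<in>words_plus A. \<phi>2 w \<in> sg_carrier S2"
    "\<forall>u\<in>words_plus A. \<forall>v\<in>words_plus A. \<phi>2 (u @ v) = sg_mult S2 (\<phi>2 u) (\<phi>2 v)"
    "L2 = {w \<in> words_plus A. \<phi>2 w \<in> \<phi>2 ` L2}" using r2 unfolding sg_recognizable_def by blast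
  define \<psi> where "\<psi> w = prod_encode (\<phi>1 w, \<phi>2 w)" for w
  have P: "sg_prod S1 S2 \<in> V" using V S1(1) S2(1) unfolding sg_pseudovariety_def by blast
  have "sg_recognizable V A {w \<in> words_plus A. \<psi> w \<in> \<psi> ` X}"
    by (rule rec_hom[OF P _ _ X]) (use S1 S2 in \<open>auto simp: \<psi>_def sg_prod_def\<close>)
  moreover have "{w \<in> words_plus A. \<psi> w \<in> \<psi> ` X} = X"
  proof
    show "X \<subseteq> {w \<in> words_plus A. \<psi> w \<in> \<psi> ` X}" using X by auto
  next
    show "{w \<in> words_plus A. \<psi> w \<in> \<psi> ` X} \<subseteq> X"
    proof
      fix w assume "w \<in> {w \<in> words_plus A. \<psi> w \<in> \<psi> ` X}"
      then obtain u where w: "w \<in> words_plus A" and u: "u \<in> X" "\<psi> w = \<psi> u" by blast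
      have uA: "u \<in> words_plus A" using u X by blast
      have "\<phi>1 w = \<phi>1 u" "\<phi>2 w = \<phi>2 u" using u(2) by (simp_all add: \<psi>_def)
      then have "w \<in> L1 \<longleftrightarrow> u \<in> L1" "w \<in> L2 \<longleftrightarrow> u \<in> L2"
        using sat[OF S1(4) w uA] sat[OF S2(4) w uA] by blast+
      then show "w \<in> X" using c[OF w uA] u(1) by blast
    qed
  qed
  ultimately show ?thesis by simp
qed

lemma rec_subset: "sg_recognizable V A L \<Longrightarrow> L \<subseteq> words_plus A"
  unfolding sg_recognizable_def by blast

lemma rec_Un: "sg_pseudovariety V \<Longrightarrow> sg_recognizable V A L1 \<Longrightarrow> sg_recognizable V A L2 \<Longrightarrow> sg_recognizable V A (L1 \<union> L2)"
  by (rule rec_combine[of V A L1 L2]) (auto dest: rec_subset)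

lemma rec_Int: "sg_pseudovariety V \<Longrightarrow> sg_recognizable V A L1 \<Longrightarrow> sg_recognizable V A L2 \<Longrightarrow> sg_recognizable V A (L1 \<inter> L2)"
  by (rule rec_combine[of V A L1 L2]) (auto dest: rec_subset)

lemma rec_UN:
  assumes V: "sg_pseudovariety V" and "finite I" "\<forall>i\<in>I. sg_recognizable V A (f i)"
  shows "sg_recognizable V A (\<Union>i\<in>I. f i)"
  using assms(2,3)
proof (induction I rule: finite_induct)
  case empty then show ?case using rec_empty[OF V] by simp
next
  case (insert i I) then show ?case using rec_Un[OF V, of A "f i" "\<Union>i\<in>I. f i"] by simp
qed

definition N1 :: "nat sgrp" where "N1 = \<lparr>sg_carrier = {0, 1}, sg_mult = (\<lambda>_ _. 0)\<rparr>"

lemma wp_len: "u \<in> words_plus A \<Longrightarrow> v \<in> words_plus A \<Longrightarrow> u @ v \<in> words_plus A \<and> length (u @ v) \<ge> 2"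
  unfolding words_plus_def by (cases u; cases v) auto

lemma N1_in:
  assumes V: "sg_pseudovariety V" and cc: "sg_concat_closed V"
  shows "N1 \<in> V"
proof -
  let ?W = "words_plus {0::nat}"
  have "sg_recognizable V {0::nat} (word_concat ?W ?W)"
    using cc[unfolded sg_concat_closed_def, rule_format, of "{0}" ?W ?W] rec_all[OF V, of "{0::nat}"]
    by blast
  then obtain S \<phi> where S: "S \<in> V" "\<forall>w\<in>?W. \<phi> w \<in> sg_carrier S"
    "\<forall>u\<in>?W. \<forall>v\<in>?W. \<phi> (u @ v) = sg_mult S (\<phi> u) (\<phi> v)"
    "word_concat ?W ?W = {w \<in> ?W. \<phi> w \<in> \<phi> ` (word_concat ?W ?W)}"
    unfolding sg_recognizable_def by blast
  have finS: "fin_sg S" using V S(1) unfolding sg_pseudovariety_def by blast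
  define x where "x = \<phi> [0]"
  have w0: "[0] \<in> ?W" "[0,0] \<in> ?W" by (simp_all add: words_plus_def)
  have nc: "[0] \<notin> word_concat ?W ?W" unfolding word_concat_def words_plus_def by (auto simp: Cons_eq_append_conv)
  have ne: "\<phi> (u @ v) \<noteq> x" if uv0: "u \<in> ?W" "v \<in> ?W" for u v
  proof
    assume eq: "\<phi> (u @ v) = x"
    have uv: "u @ v \<in> word_concat ?W ?W" using uv0 unfolding word_concat_def by blast
    have uvW: "u @ v \<in> ?W" using uv0 wp_len by blast
    have "u @ v \<in> word_concat ?W ?W \<longleftrightarrow> [0] \<in> word_concat ?W ?W"
      using sat[OF S(4) uvW w0(1)] eq x_def by simp
    then show False using nc uv by blast
  qed
  define T where "T = \<lparr>sg_carrier = \<phi> ` ?W, sg_mult = sg_mult S\<rparr>"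
  have sub: "\<phi> ` ?W \<subseteq> sg_carrier S" using S(2) by blast
  have finT: "fin_sg T"
    unfolding fin_sg_def T_def
  proof (simp only: sgrp.simps, intro conjI)
    show "finite (\<phi> ` ?W)" using finS sub unfolding fin_sg_def using finite_subset by blast
    show "\<phi> ` ?W \<noteq> {}" using w0 by blast
    show "\<forall>x\<in>\<phi> ` ?W. \<forall>y\<in>\<phi> ` ?W. sg_mult S x y \<in> \<phi> ` ?W"
    proof (intro ballI)
      fix a b assume "a \<in> \<phi> ` ?W" "b \<in> \<phi> ` ?W"
      then obtain u v where "u \<in> ?W" "v \<in> ?W" "a = \<phi> u" "b = \<phi> v" by blast
      then have "sg_mult S a b = \<phi> (u @ v)" "u @ v \<in> ?W" using S(3) wp_len[of u "{0}" v] by auto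
      then show "sg_mult S a b \<in> \<phi> ` ?W" by (metis image_eqI)
    qed
    show "\<forall>x\<in>\<phi> ` ?W. \<forall>y\<in>\<phi> ` ?W. \<forall>z\<in>\<phi> ` ?W. sg_mult S (sg_mult S x y) z = sg_mult S x (sg_mult S y z)"
      using finS sub unfolding fin_sg_def by blast
  qed
  have subV: "\<forall>S T. T \<in> V \<longrightarrow> fin_sg S \<longrightarrow> sg_carrier S \<subseteq> sg_carrier T \<longrightarrow>
        (\<forall>x\<in>sg_carrier S. \<forall>y\<in>sg_carrier S. sg_mult S x y = sg_mult T x y) \<longrightarrow> S \<in> V"
    using V unfolding sg_pseudovariety_def by (elim conjE) assumption
  have TV: "T \<in> V" by (rule subV[rule_format, OF S(1) finT]) (use sub in \<open>simp_all add: T_def\<close>)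
  define h where "h t = (if t = x then 1 else (0::nat))" for t
  have finN: "fin_sg N1" unfolding fin_sg_def N1_def by auto
  have hom: "sg_hom T N1 h" unfolding sg_hom_def
  proof (intro conjI ballI)
    fix a assume "a \<in> sg_carrier T" then show "h a \<in> sg_carrier N1" by (simp add: h_def N1_def)
  next
    fix a b assume "a \<in> sg_carrier T" "b \<in> sg_carrier T"
    then obtain u v where uv: "u \<in> ?W" "v \<in> ?W" "a = \<phi> u" "b = \<phi> v" by (auto simp: T_def)
    then have "sg_mult T a b = \<phi> (u @ v)" using S(3) by (simp add: T_def)
    then show "h (sg_mult T a b) = sg_mult N1 (h a) (h b)" using ne[OF uv(1,2)] by (simp add: h_def N1_def)
  qed
  have surj: "h ` sg_carrier T = sg_carrier N1"
  proof -
    have "h (\<phi> [0]) = 1" "h (\<phi> ([0] @ [0])) = 0" using ne[OF w0(1) w0(1)] by (simp_all add: h_def x_def)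
    moreover have "[0] @ [0] \<in> ?W" using w0 by simp
    ultimately have "1 \<in> h ` sg_carrier T" "0 \<in> h ` sg_carrier T" using w0 unfolding T_def
      by (metis image_eqI sgrp.select_convs(1))+
    moreover have "h ` sg_carrier T \<subseteq> {0,1}" by (auto simp: h_def)
    ultimately show ?thesis by (auto simp: N1_def)
  qed
  have homV: "\<forall>S T h. T \<in> V \<longrightarrow> fin_sg S \<longrightarrow> sg_hom T S h \<longrightarrow> h ` sg_carrier T = sg_carrier S \<longrightarrow> S \<in> V"
    using V unfolding sg_pseudovariety_def by (elim conjE) assumption
  show ?thesis using homV[rule_format, OF TV finN hom surj] .
qed

lemma rec_letters:
  assumes V: "sg_pseudovariety V" and cc: "sg_concat_closed V" and B: "B \<subseteq> A"
  shows "sg_recognizable V A {[b] | b. b \<in> B}"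
proof -
  define \<phi> where "\<phi> w = (if \<exists>b\<in>B. w = [b] then 1 else (0::nat))" for w :: "'a list"
  have "sg_recognizable V A {w \<in> words_plus A. \<phi> w \<in> \<phi> ` {[b] | b. b \<in> B}}"
  proof (rule rec_hom[OF N1_in[OF V cc]])
    show "\<forall>w\<in>words_plus A. \<phi> w \<in> sg_carrier N1" by (auto simp: \<phi>_def N1_def)
    show "\<forall>u\<in>words_plus A. \<forall>v\<in>words_plus A. \<phi> (u @ v) = sg_mult N1 (\<phi> u) (\<phi> v)"
      by (auto simp: \<phi>_def N1_def words_plus_def Cons_eq_append_conv append_eq_Cons_conv)
    show "{[b] |b. b \<in> B} \<subseteq> words_plus A" using B by (auto simp: words_plus_def)
  qed
  moreover have "{w \<in> words_plus A. \<phi> w \<in> \<phi> ` {[b] | b. b \<in> B}} = {[b] | b. b \<in> B}"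
    using B by (auto simp: \<phi>_def words_plus_def)
  ultimately show ?thesis by simp
qed

lemma rec_first:
  assumes V: "sg_pseudovariety V" and cc: "sg_concat_closed V" and A: "finite (A :: nat set)"
  shows "sg_recognizable V A {w \<in> words_plus A. P (hd w)}"
proof -
  define Bl where "Bl = {[b] | b. b \<in> {e \<in> A. P e}}"
  have r: "sg_recognizable V A Bl" unfolding Bl_def by (rule rec_letters[OF V cc]) auto
  have "sg_recognizable V A (word_concat Bl (words_plus A))"
    using cc[unfolded sg_concat_closed_def, rule_format, OF A r rec_all[OF V]] .
  then have "sg_recognizable V A (word_concat Bl (words_plus A) \<union> Bl)" using rec_Un[OF V] r by blast
  moreover have "word_concat Bl (words_plus A) \<union> Bl = {w \<in> words_plus A. P (hd w)}"
  proof
    show "word_concat Bl (words_plus A) \<union> Bl \<subseteq> {w \<in> words_plus A. P (hd w)}"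
    proof
      fix w assume "w \<in> word_concat Bl (words_plus A) \<union> Bl"
      then consider (c) b v where "w = [b] @ v" "b \<in> A" "P b" "v \<in> words_plus A"
        | (s) b where "w = [b]" "b \<in> A" "P b" unfolding word_concat_def Bl_def by blast
      then show "w \<in> {w \<in> words_plus A. P (hd w)}" by cases (auto simp: words_plus_def)
    qed
  next
    show "{w \<in> words_plus A. P (hd w)} \<subseteq> word_concat Bl (words_plus A) \<union> Bl"
    proof
      fix w assume w: "w \<in> {w \<in> words_plus A. P (hd w)}"
      then obtain e w' where ew: "w = e # w'" by (cases w) (auto simp: words_plus_def)
      then have e: "e \<in> A" "P e" "set w' \<subseteq> A" using w by (auto simp: words_plus_def)
      have eB: "[e] \<in> Bl" using e unfolding Bl_def by blast
      show "w \<in> word_concat Bl (words_plus A) \<union> Bl"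
      proof (cases "w' = []")
        case True then show ?thesis using eB ew by simp
      next
        case False
        then have "w' \<in> words_plus A" using e by (simp add: words_plus_def)
        then have "[e] @ w' \<in> word_concat Bl (words_plus A)" using eB unfolding word_concat_def by blast
        then show ?thesis using ew by simp
      qed
    qed
  qed
  ultimately show ?thesis by simp
qed

lemma rec_last:
  assumes V: "sg_pseudovariety V" and cc: "sg_concat_closed V" and A: "finite (A :: nat set)"
  shows "sg_recognizable V A {w \<in> words_plus A. P (last w)}"
proof -
  define Bl where "Bl = {[b] | b. b \<in> {e \<in> A. P e}}"
  have r: "sg_recognizable V A Bl" unfolding Bl_def by (rule rec_letters[OF V cc]) auto
  have "sg_recognizable V A (word_concat (words_plus A) Bl)"
    using cc[unfolded sg_concat_closed_def, rule_format, OF A rec_all[OF V] r] .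
  then have "sg_recognizable V A (word_concat (words_plus A) Bl \<union> Bl)" using rec_Un[OF V] r by blast
  moreover have "word_concat (words_plus A) Bl \<union> Bl = {w \<in> words_plus A. P (last w)}"
  proof
    show "word_concat (words_plus A) Bl \<union> Bl \<subseteq> {w \<in> words_plus A. P (last w)}"
    proof
      fix w assume "w \<in> word_concat (words_plus A) Bl \<union> Bl"
      then consider (c) b v where "w = v @ [b]" "b \<in> A" "P b" "v \<in> words_plus A"
        | (s) b where "w = [b]" "b \<in> A" "P b" unfolding word_concat_def Bl_def by blast
      then show "w \<in> {w \<in> words_plus A. P (last w)}" by cases (auto simp: words_plus_def)
    qed
  next
    show "{w \<in> words_plus A. P (last w)} \<subseteq> word_concat (words_plus A) Bl \<union> Bl"
    proof
      fix w assume w: "w \<in> {w \<in> words_plus A. P (last w)}"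
      then obtain e w' where ew: "w = w' @ [e]" by (cases w rule: rev_cases) (auto simp: words_plus_def)
      then have e: "e \<in> A" "P e" "set w' \<subseteq> A" using w by (auto simp: words_plus_def)
      have eB: "[e] \<in> Bl" using e unfolding Bl_def by blast
      show "w \<in> word_concat (words_plus A) Bl \<union> Bl"
      proof (cases "w' = []")
        case True then show ?thesis using eB ew by simp
      next
        case False
        then have "w' \<in> words_plus A" using e by (simp add: words_plus_def)
        then have "w' @ [e] \<in> word_concat (words_plus A) Bl" using eB unfolding word_concat_def by blast
        then show ?thesis using ew by simp
      qed
    qed
  qed
  ultimately show ?thesis by simp
qed



lemma graph_to_word:
  assumes V: "sg_pseudovariety V" and cc: "sg_concat_closed V" and fg: "finite_graph (A :: (nat, nat) graph)"
    and rec: "sgd_recognizable (global_pv V) A L"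
  shows "\<exists>L'. sg_recognizable V (gr_edges A) L' \<and> L \<subseteq> L' \<and> (\<forall>w. is_path A w \<longrightarrow> w \<in> L' \<longrightarrow> w \<in> L)"
proof -
  let ?E = "gr_edges A"
  have finE: "finite ?E" using fg unfolding finite_graph_def by blast
  obtain F hv he where LP: "L \<subseteq> {w. is_path A w}" and F: "F \<in> global_pv V"
    and hom: "sgd_hom (free_sgd A) F hv he" and Lsat: "L = {w \<in> {w. is_path A w}. he w \<in> he ` L}"
    using rec unfolding sgd_recognizable_def free_simps by blast
  obtain S where S: "S \<in> V" "sgd_divides F (sg_as_sgd S)" using gv_div[OF V F] by blast
  have finS: "fin_sg S" using V S(1) unfolding sg_pseudovariety_def by blast
  obtain \<phi> where \<phi>1: "\<forall>w\<in>words_plus ?E. \<phi> w \<in> sg_carrier S"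
    and \<phi>2: "\<forall>u\<in>words_plus ?E. \<forall>v\<in>words_plus ?E. \<phi> (u @ v) = sg_mult S (\<phi> u) (\<phi> v)"
    and \<phi>3: "\<forall>w u. is_path A w \<longrightarrow> is_path A u \<longrightarrow> \<phi> w = \<phi> u \<longrightarrow> gr_src A (last w) = gr_src A (last u) \<longrightarrow>
       gr_tgt A (hd w) = gr_tgt A (hd u) \<longrightarrow> he w = he u"
    using lift_exists[OF hom S(2) finS] by blast
  define Comp where "Comp a b =
     {w \<in> words_plus ?E. \<phi> w \<in> \<phi> ` {u \<in> L. gr_tgt A (hd u) = gr_tgt A a \<and> gr_src A (last u) = gr_src A b}} \<inter>
     {w \<in> words_plus ?E. gr_tgt A (hd w) = gr_tgt A a} \<inter> {w \<in> words_plus ?E. gr_src A (last w) = gr_src A b}" for a b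
  define L' where "L' = (\<Union>p\<in>?E \<times> ?E. Comp (fst p) (snd p))"
  have LW: "L \<subseteq> words_plus ?E" using LP is_path_words by blast
  have r: "sg_recognizable V ?E L'" unfolding L'_def
  proof (rule rec_UN[OF V])
    show "finite (?E \<times> ?E)" using finE by simp
    show "\<forall>p\<in>?E \<times> ?E. sg_recognizable V ?E (Comp (fst p) (snd p))"
    proof
      fix p assume "p \<in> ?E \<times> ?E"
      have r1: "sg_recognizable V ?E {w \<in> words_plus ?E. \<phi> w \<in> \<phi> ` {u \<in> L. gr_tgt A (hd u) = gr_tgt A (fst p) \<and> gr_src A (last u) = gr_src A (snd p)}}"
        by (rule rec_hom[OF S(1) \<phi>1 \<phi>2]) (use LW in blast)
      have r2: "sg_recognizable V ?E {w \<in> words_plus ?E. (\<lambda>e. gr_tgt A e = gr_tgt A (fst p)) (hd w)}"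
        by (rule rec_first[OF V cc finE])
      have r3: "sg_recognizable V ?E {w \<in> words_plus ?E. (\<lambda>e. gr_src A e = gr_src A (snd p)) (last w)}"
        by (rule rec_last[OF V cc finE])
      show "sg_recognizable V ?E (Comp (fst p) (snd p))"
        unfolding Comp_def using rec_Int[OF V, OF rec_Int[OF V r1 r2] r3] by simp
    qed
  qed
  have sub: "L \<subseteq> L'"
  proof
    fix u assume u: "u \<in> L"
    then have uW: "u \<in> words_plus ?E" using LW by blast
    then have "hd u \<in> ?E" "last u \<in> ?E" unfolding words_plus_def by auto
    moreover have "u \<in> Comp (hd u) (last u)" unfolding Comp_def using u uW by blast
    ultimately show "u \<in> L'" unfolding L'_def by force
  qed
  have bk: "\<forall>w. is_path A w \<longrightarrow> w \<in> L' \<longrightarrow> w \<in> L"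
  proof (intro allI impI)
    fix w assume w: "is_path A w" and "w \<in> L'"
    then obtain a b where "w \<in> Comp a b" unfolding L'_def by blast
    then obtain u where u: "u \<in> L" "\<phi> w = \<phi> u" "gr_tgt A (hd u) = gr_tgt A a" "gr_src A (last u) = gr_src A b"
      and wt: "gr_tgt A (hd w) = gr_tgt A a" and ws: "gr_src A (last w) = gr_src A b"
      unfolding Comp_def by auto
    have up: "is_path A u" using u(1) LP by blast
    have "he w = he u" using \<phi>3 w up u wt ws by metis
    then have "he w \<in> he ` L" using u(1) by (metis imageI)
    then show "w \<in> L" using w Lsat by blast
  qed
  show ?thesis using r sub bk by blast
qed

lemma word_to_graph:
  assumes rec: "sg_recognizable V (gr_edges A) X"
  shows "sgd_recognizable (global_pv V) A {w \<in> X. is_path A w}"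
proof -
  let ?E = "gr_edges A"
  obtain S \<phi> where S: "S \<in> V" "\<forall>w\<in>words_plus ?E. \<phi> w \<in> sg_carrier S"
    "\<forall>u\<in>words_plus ?E. \<forall>v\<in>words_plus ?E. \<phi> (u @ v) = sg_mult S (\<phi> u) (\<phi> v)"
    "X = {w \<in> words_plus ?E. \<phi> w \<in> \<phi> ` X}" using rec unfolding sg_recognizable_def by blast
  have XW: "X \<subseteq> words_plus ?E" using rec by (rule rec_subset)
  have hom: "sgd_hom (free_sgd A) (sg_as_sgd S) (\<lambda>_. 0) \<phi>"
    unfolding sgd_hom_def free_simps
  proof (intro conjI)
    show "\<forall>x\<in>gr_verts A. 0 \<in> sgd_verts (sg_as_sgd S)" by (simp add: sg_as_sgd_def)
    show "\<forall>e\<in>{w. is_path A w}. \<phi> e \<in> sgd_edges (sg_as_sgd S) \<and> sgd_src (sg_as_sgd S) (\<phi> e) = 0 \<and> sgd_tgt (sg_as_sgd S) (\<phi> e) = 0"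
      using S(2) is_path_words[of A] by (simp add: sg_as_sgd_def)
    show "\<forall>s\<in>{w. is_path A w}. \<forall>t\<in>{w. is_path A w}. gr_src A (last s) = gr_tgt A (hd t) \<longrightarrow> \<phi> (s @ t) = sgd_cmp (sg_as_sgd S) (\<phi> s) (\<phi> t)"
      using S(3) is_path_words[of A] by (simp add: sg_as_sgd_def)
  qed
  have sub: "{w \<in> X. is_path A w} \<subseteq> sgd_edges (free_sgd A)" by (auto simp: free_simps)
  have eq: "{w \<in> X. is_path A w} = {w \<in> sgd_edges (free_sgd A). \<phi> w \<in> \<phi> ` {w \<in> X. is_path A w}}"
  proof
    show "{w \<in> X. is_path A w} \<subseteq> {w \<in> sgd_edges (free_sgd A). \<phi> w \<in> \<phi> ` {w \<in> X. is_path A w}}"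
      by (auto simp: free_simps)
  next
    show "{w \<in> sgd_edges (free_sgd A). \<phi> w \<in> \<phi> ` {w \<in> X. is_path A w}} \<subseteq> {w \<in> X. is_path A w}"
    proof
      fix w assume "w \<in> {w \<in> sgd_edges (free_sgd A). \<phi> w \<in> \<phi> ` {w \<in> X. is_path A w}}"
      then obtain u where w: "is_path A w" and u: "u \<in> X" "\<phi> w = \<phi> u" by (auto simp: free_simps)
      have "w \<in> X \<longleftrightarrow> u \<in> X" using sat[OF S(4) is_path_words[OF w]] u XW by blast
      then show "w \<in> {w \<in> X. is_path A w}" using u w by blast
    qed
  qed
  show ?thesis unfolding sgd_recognizable_def using as_in_gv[OF S(1)] hom eq sub by blast
qed


definition one_graph :: "nat set \<Rightarrow> (nat, nat) graph" where
  "one_graph A = \<lparr>gr_verts = {0}, gr_edges = A, gr_src = (\<lambda>_. 0), gr_tgt = (\<lambda>_. 0)\<rparr>"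

lemma one_graph_simps: "gr_edges (one_graph A) = A" "gr_src (one_graph A) e = 0" "gr_tgt (one_graph A) e = 0"
  by (simp_all add: one_graph_def)

lemma one_graph_path: "is_path (one_graph A) w \<longleftrightarrow> w \<in> words_plus A"
  unfolding is_path_def words_plus_def one_graph_def by auto

lemma one_graph_fin: "finite A \<Longrightarrow> finite_graph (one_graph A)"
  unfolding finite_graph_def one_graph_def by auto

theorem mainTheorem4:
  assumes "sg_pseudovariety V"
  shows "sg_concat_closed V \<longleftrightarrow> sgd_concat_closed (global_pv V)"
proof
  note V = assms
  assume cc: "sg_concat_closed V"
  show "sgd_concat_closed (global_pv V)" unfolding sgd_concat_closed_def
  proof (intro allI impI)
    fix A :: "(nat, nat) graph" and L K
    assume fg: "finite_graph A" and rL: "sgd_recognizable (global_pv V) A L" and rK: "sgd_recognizable (global_pv V) A K"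
    have finE: "finite (gr_edges A)" using fg unfolding finite_graph_def by blast
    obtain L' where L': "sg_recognizable V (gr_edges A) L'" "L \<subseteq> L'" "\<forall>w. is_path A w \<longrightarrow> w \<in> L' \<longrightarrow> w \<in> L"
      using graph_to_word[OF V cc fg rL] by blast
    obtain K' where K': "sg_recognizable V (gr_edges A) K'" "K \<subseteq> K'" "\<forall>w. is_path A w \<longrightarrow> w \<in> K' \<longrightarrow> w \<in> K"
      using graph_to_word[OF V cc fg rK] by blast
    have LP: "L \<subseteq> {w. is_path A w}" using rL unfolding sgd_recognizable_def free_simps by blast
    have KP: "K \<subseteq> {w. is_path A w}" using rK unfolding sgd_recognizable_def free_simps by blast
    have L'W: "L' \<subseteq> words_plus (gr_edges A)" "K' \<subseteq> words_plus (gr_edges A)" using L'(1) K'(1) by (blast dest: rec_subset)+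
    have rX: "sg_recognizable V (gr_edges A) (word_concat L' K')"
      using cc[unfolded sg_concat_closed_def, rule_format, OF finE L'(1) K'(1)] .
    have "path_concat A L K = {w \<in> word_concat L' K'. is_path A w}"
    proof
      show "path_concat A L K \<subseteq> {w \<in> word_concat L' K'. is_path A w}"
      proof
        fix w assume "w \<in> path_concat A L K"
        then obtain u v where w: "w = u @ v" "u \<in> L" "v \<in> K" "gr_src A (last u) = gr_tgt A (hd v)"
          unfolding path_concat_def free_simps by blast
        have p: "is_path A u" "is_path A v" using w LP KP by blast+
        then have ne: "u \<noteq> []" "v \<noteq> []" unfolding is_path_def by blast+
        have "is_path A w" using is_path_append[OF ne] p w by blast
        moreover have "w \<in> word_concat L' K'" using w L'(2) K'(2) unfolding word_concat_def by blast
        ultimately show "w \<in> {w \<in> word_concat L' K'. is_path A w}" by blast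
      qed
    next
      show "{w \<in> word_concat L' K'. is_path A w} \<subseteq> path_concat A L K"
      proof
        fix w assume "w \<in> {w \<in> word_concat L' K'. is_path A w}"
        then obtain u v where w: "w = u @ v" "u \<in> L'" "v \<in> K'" "is_path A w"
          unfolding word_concat_def by blast
        have ne: "u \<noteq> []" "v \<noteq> []" using w L'W unfolding words_plus_def by blast+
        have p: "is_path A u" "is_path A v" "gr_src A (last u) = gr_tgt A (hd v)"
          using is_path_append[OF ne] w by blast+
        have "u \<in> L" "v \<in> K" using L'(3) K'(3) p w by blast+
        then show "w \<in> path_concat A L K" unfolding path_concat_def free_simps using p w by blast
      qed
    qed
    then show "sgd_recognizable (global_pv V) A (path_concat A L K)" using word_to_graph[OF rX] by simp
  qed
next
  note V = assms
  assume gc: "sgd_concat_closed (global_pv V)"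
  show "sg_concat_closed V" unfolding sg_concat_closed_def
  proof (intro allI impI)
    fix A :: "nat set" and L K
    assume finA: "finite A" and rL: "sg_recognizable V A L" and rK: "sg_recognizable V A K"
    let ?G = "one_graph A"
    have LW: "L \<subseteq> words_plus A" "K \<subseteq> words_plus A" using rL rK by (blast dest: rec_subset)+
    have "sgd_recognizable (global_pv V) ?G {w \<in> L. is_path ?G w}"
      by (rule word_to_graph) (simp add: one_graph_simps rL)
    moreover have "{w \<in> L. is_path ?G w} = L" using LW by (auto simp: one_graph_path)
    ultimately have gL: "sgd_recognizable (global_pv V) ?G L" by simp
    have "sgd_recognizable (global_pv V) ?G {w \<in> K. is_path ?G w}"
      by (rule word_to_graph) (simp add: one_graph_simps rK)
    moreover have "{w \<in> K. is_path ?G w} = K" using LW by (auto simp: one_graph_path)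
    ultimately have gK: "sgd_recognizable (global_pv V) ?G K" by simp
    have pc: "path_concat ?G L K = word_concat L K"
      unfolding path_concat_def word_concat_def free_simps one_graph_simps by simp
    have "sgd_recognizable (global_pv V) ?G (word_concat L K)"
      using gc[unfolded sgd_concat_closed_def, rule_format, OF one_graph_fin[OF finA] gL gK] pc by simp
    then obtain F hv he where LP: "word_concat L K \<subseteq> {w. is_path ?G w}" and F: "F \<in> global_pv V"
      and hom: "sgd_hom (free_sgd ?G) F hv he"
      and Lsat: "word_concat L K = {w \<in> {w. is_path ?G w}. he w \<in> he ` (word_concat L K)}"
      unfolding sgd_recognizable_def free_simps by blast
    obtain S where S: "S \<in> V" "sgd_divides F (sg_as_sgd S)" using gv_div[OF V F] by blast
    have finS: "fin_sg S" using V S(1) unfolding sg_pseudovariety_def by blast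
    obtain \<phi> where \<phi>1: "\<forall>w\<in>words_plus A. \<phi> w \<in> sg_carrier S"
      and \<phi>2: "\<forall>u\<in>words_plus A. \<forall>v\<in>words_plus A. \<phi> (u @ v) = sg_mult S (\<phi> u) (\<phi> v)"
      and \<phi>3: "\<forall>w u. is_path ?G w \<longrightarrow> is_path ?G u \<longrightarrow> \<phi> w = \<phi> u \<longrightarrow> he w = he u"
      using lift_exists[OF hom S(2) finS] by (simp add: one_graph_simps) blast
    have LKW: "word_concat L K \<subseteq> words_plus A" using LP by (auto simp: one_graph_path)
    have eq: "word_concat L K = {w \<in> words_plus A. \<phi> w \<in> \<phi> ` (word_concat L K)}"
    proof
      show "word_concat L K \<subseteq> {w \<in> words_plus A. \<phi> w \<in> \<phi> ` (word_concat L K)}" using LKW by blast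
    next
      show "{w \<in> words_plus A. \<phi> w \<in> \<phi> ` (word_concat L K)} \<subseteq> word_concat L K"
      proof
        fix w assume "w \<in> {w \<in> words_plus A. \<phi> w \<in> \<phi> ` (word_concat L K)}"
        then obtain u where w: "w \<in> words_plus A" and u: "u \<in> word_concat L K" "\<phi> w = \<phi> u" by blast
        have "is_path ?G w" "is_path ?G u" using w u LKW by (auto simp: one_graph_path)
        then have "he w = he u" using \<phi>3 u by blast
        then have "he w \<in> he ` (word_concat L K)" using u by (metis imageI)
        then show "w \<in> word_concat L K" using Lsat \<open>is_path ?G w\<close> by blast
      qed
    qed
    show "sg_recognizable V A (word_concat L K)"
      unfolding sg_recognizable_def using LKW S(1) \<phi>1 \<phi>2 eq by blast
  qed
qed


end
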